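(* Let $0<\iota<1/3$, $s\in(0,1)$, and let $\overline\omega:[0,\infty)\to[0,\infty)$ be continuous, nondecreasing, with $\overline\omega(0)=0$ and $\limsup_{t\to\infty}\overline\omega(t)/t<\infty$, satisfying the Dini condition (respectively the $2s$-Dini condition). Then there exists a continuous, increasing, concave function $\omega:[0,\infty)\to[0,\infty)$ with $\omega\in C^2((0,\infty))$, $\omega(0)=0$, $\omega\ge\overline\omega$, which satisfies the Dini condition (respectively the $2s$-Dini condition), and there exists $t_0>0$ such that $t\mapsto\omega(t)/t^\iota$ is decreasing on $(0,t_0)$ and $$t^2\omega''(t)\ge-\omega(t)-3t\omega'(t)\quad\text{for all }0<t<t_0.$$
   Context: Dini condition: $\int_0^1\omega(t)/t\,dt<\infty$. $2s$-Dini condition ($s\neq1/2$): $\int_0^1\frac{\omega(t)}{t}\frac{\omega(t)^{2s-1}-\omega(1)^{2s-1}}{1-2s}dt<\infty$; for $s=1/2$: $\int_0^1\frac{\omega(t)}{t}\ln\frac{\omega(1)}{\omega(t)}dt<\infty$. *)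

theory Defs
  imports "HOL-Analysis.Analysis"
begin

definition dini :: "(real \<Rightarrow> real) \<Rightarrow> bool" where
  "dini w \<longleftrightarrow> set_integrable lborel {0<..1} (\<lambda>t. w t / t)"

definition two_s_dini :: "real \<Rightarrow> (real \<Rightarrow> real) \<Rightarrow> bool" where
  "two_s_dini s w \<longleftrightarrow>
     (if s = 1/2
      then (set_integrable lborel {0<..1} (\<lambda>t. w t / t * ln (w 1 / w t)))
      else (set_integrable lborel {0<..1}
             (\<lambda>t. w t / t * ((w t powr (2 * s - 1) - w 1 powr (2 * s - 1)) / (1 - 2 * s)))))"

definition admissible_modulus :: "(real \<Rightarrow> real) \<Rightarrow> bool" where
  "admissible_modulus wb \<longleftrightarrow>
     continuous_on {0..} wb \<and> mono_on {0..} wb \<and> wb 0 = 0 \<and> (\<forall>t\<ge>0. wb t \<ge> 0) \<and>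
     Limsup at_top (\<lambda>t. ereal (wb t / t)) < \<infinity>"

definition good_modulus :: "real \<Rightarrow> (real \<Rightarrow> real) \<Rightarrow> (real \<Rightarrow> real) \<Rightarrow> bool" where
  "good_modulus \<iota> wb w \<longleftrightarrow>
     continuous_on {0..} w \<and> strict_mono_on {0..} w \<and> concave_on {0..} w \<and>
     (\<forall>t\<ge>0. w t \<ge> 0) \<and> w 0 = 0 \<and>
     (\<forall>t>0. w differentiable at t) \<and> (\<forall>t>0. deriv w differentiable at t) \<and>
     continuous_on {0<..} (deriv (deriv w)) \<and>
     (\<forall>t\<ge>0. w t \<ge> wb t) \<and>
     (\<exists>t0>0. strict_antimono_on {0<..<t0} (\<lambda>t. w t / t powr \<iota>) \<and>
        (\<forall>t. 0 < t \<and> t < t0 \<longrightarrow>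
            t^2 * deriv (deriv w) t \<ge> - w t - 3 * t * deriv w t))"

end

theory Submission
  imports Defs
begin

lemma int_powr:
  fixes x y e :: real
  assumes "0 < x" "x \<le> y" "e \<noteq> 0"
  shows "((\<lambda>v. v powr (e - 1)) has_integral ((y powr e - x powr e) / e)) {x..y}"
proof -
  have "((\<lambda>v. v powr (e - 1)) has_integral ((\<lambda>v. v powr e / e) y - (\<lambda>v. v powr e / e) x)) {x..y}"
  proof (rule fundamental_theorem_of_calculus)
    show "x \<le> y" by fact
    fix v assume v: "v \<in> {x..y}"
    then have "v > 0" using assms by auto
    then have "((\<lambda>v. v powr e / e) has_real_derivative (e * v powr (e - 1) / e)) (at v)"
      by (auto intro!: derivative_eq_intros)
    then show "((\<lambda>v. v powr e / e) has_vector_derivative v powr (e - 1)) (at v within {x..y})"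
      using assms by (simp add: has_real_derivative_iff_has_vector_derivative[symmetric] has_field_derivative_at_within)
  qed
  then show ?thesis by (simp add: diff_divide_distrib)
qed

lemma HK_to_lborel:
  fixes h :: "real \<Rightarrow> real"
  assumes "h integrable_on S" "\<And>t. t \<in> S \<Longrightarrow> 0 \<le> h t" "S \<in> sets borel" "continuous_on S h"
  shows "set_integrable lborel S h"
proof -
  have "set_integrable lebesgue S h"
    using nonnegative_absolutely_integrable_1[OF assms(1)] assms(2) by blast
  moreover have "(\<lambda>x. indicator S x *\<^sub>R h x) \<in> borel_measurable lborel"
    using borel_measurable_continuous_on_indicator[OF assms(3,4)] by simp
  ultimately show ?thesis
    unfolding set_integrable_def using integrable_completion by blast
qed

lemma setint_from_bounded:
  fixes h :: "real \<Rightarrow> real"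
  assumes cont: "continuous_on {0<..1} h" and nn: "\<And>t. t \<in> {0<..1} \<Longrightarrow> 0 \<le> h t"
    and bnd: "\<And>e. 0 < e \<Longrightarrow> e \<le> 1 \<Longrightarrow> integral {e..1} h \<le> B"
  shows "set_integrable lborel {0<..1::real} h"
proof -
  define F where "F k x = (if x \<in> {1/Suc k..1} then h x else 0)" for k :: nat and x :: real
  have sub: "{1/Suc k..1} \<subseteq> {0<..1::real}" for k
  proof
    fix x assume x: "x \<in> {1/Suc k..1::real}"
    have p: "0 < 1 / real (Suc k)" by simp
    from x have a: "1 / real (Suc k) \<le> x" and b: "x \<le> 1" by auto
    from p a have "0 < x" by linarith
    with b show "x \<in> {0<..1}" by simp
  qed
  have int1: "h integrable_on {1/Suc k..1}" for k
    by (rule integrable_continuous_interval, rule continuous_on_subset[OF cont sub])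
  have Fint: "F k integrable_on {0<..1}" for k
    unfolding F_def integrable_restrict_Int using int1[of k] sub[of k]
    by (simp add: Int_absorb2)
  have Fval: "integral {0<..1} (F k) = integral {1/Suc k..1} h" for k
    unfolding F_def integral_restrict_Int using sub[of k] by (simp add: Int_absorb2)
  have mono: "F k x \<le> F (Suc k) x" if "x \<in> {0<..1}" for k x
  proof -
    have "1 / real (Suc (Suc k)) \<le> 1 / real (Suc k)" by (simp add: frac_le)
    then show ?thesis using that nn[of x] unfolding F_def by auto
  qed
  have lim: "((\<lambda>k. F k x) \<longlongrightarrow> h x) sequentially" if x: "x \<in> {0<..1}" for x
  proof (rule tendsto_eventually)
    obtain N :: nat where N: "1 / x < N" using reals_Archimedean2 by blast
    have "F k x = h x" if "k \<ge> N" for k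
    proof -
      have "1 / x < Suc k" using N that by linarith
      then have "1 / real (Suc k) \<le> x" using x
        by (simp add: field_simps)
      then show ?thesis using x unfolding F_def by auto
    qed
    then show "\<forall>\<^sub>F k in sequentially. F k x = h x"
      unfolding eventually_sequentially by blast
  qed
  have bou: "bounded (range (\<lambda>k. integral {0<..1} (F k)))"
  proof -
    have "\<bar>integral {0<..1} (F k)\<bar> \<le> \<bar>B\<bar>" for k
    proof -
      have "0 \<le> integral {1/Suc k..1} h"
        using nn sub[of k] by (intro integral_nonneg int1) auto
      moreover have "integral {1/Suc k..1} h \<le> B"
        by (rule bnd) (auto simp: field_simps)
      ultimately show ?thesis using Fval[of k] by linarith
    qed
    then show ?thesis unfolding bounded_iff by (auto simp: real_norm_def)
  qed
  have "h integrable_on {0<..1}"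
    using monotone_convergence_increasing[OF Fint mono lim bou] by blast
  then show ?thesis
    by (rule HK_to_lborel) (use nn cont in auto)
qed

lemma powr_integrable:
  fixes r :: real assumes "r > 0"
  shows "set_integrable lborel {0<..1::real} (\<lambda>t. t powr (r - 1))"
proof (rule setint_from_bounded[where B = "1/r"])
  show "continuous_on {0<..1::real} (\<lambda>t. t powr (r - 1))"
    by (intro continuous_intros) auto
  show "0 \<le> t powr (r - 1)" for t :: real by simp
  fix e :: real assume e: "0 < e" "e \<le> 1"
  have "integral {e..1} (\<lambda>t. t powr (r - 1)) = (1 powr r - e powr r) / r"
    using int_powr[OF e(1) e(2), of r] assms by (simp add: integral_unique)
  also have "\<dots> \<le> 1 / r" using assms e by (simp add: divide_right_mono)
  finally show "integral {e..1} (\<lambda>t. t powr (r - 1)) \<le> 1 / r" .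
qed


definition phi :: "(real \<Rightarrow> real) \<Rightarrow> real \<Rightarrow> real \<Rightarrow> real" where
  "phi g b v = g v * v powr (-b-1)"
definition QQ :: "(real \<Rightarrow> real) \<Rightarrow> real \<Rightarrow> real \<Rightarrow> real" where
  "QQ g b t = integral {t..1} (phi g b) - integral {1..t} (phi g b)"
definition tlop :: "(real \<Rightarrow> real) \<Rightarrow> real \<Rightarrow> real \<Rightarrow> real" where
  "tlop g b t = t powr b * (g 1 / b + QQ g b t)"

locale gk =
  fixes g :: "real \<Rightarrow> real" and b :: real
  assumes gcont: "continuous_on {0..} g" and gmono: "\<And>x y. 0 \<le> x \<Longrightarrow> x \<le> y \<Longrightarrow> g x \<le> g y"
    and gnn: "\<And>x. 0 \<le> x \<Longrightarrow> 0 \<le> g x" and gconst: "\<And>x. 1 \<le> x \<Longrightarrow> g x = g 1"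
    and bpos: "0 < b"
begin

lemma phi_cont: "continuous_on {0<..} (phi g b)"
  unfolding phi_def
  by (intro continuous_intros continuous_on_subset[OF gcont]) auto

lemma phi_int: "0 < x \<Longrightarrow> phi g b integrable_on {x..y}"
  by (rule integrable_continuous_interval, rule continuous_on_subset[OF phi_cont]) auto

lemma phi_nn: "0 < v \<Longrightarrow> 0 \<le> phi g b v"
  unfolding phi_def using gnn[of v] by simp

lemma QQ_repr:
  assumes e: "0 < e" "e \<le> 1" "e \<le> x"
  shows "QQ g b x = integral {e..1} (phi g b) - integral {e..x} (phi g b)"
proof (cases "x \<le> 1")
  case True
  have "integral {e..x} (phi g b) + integral {x..1} (phi g b) = integral {e..1} (phi g b)"
    by (rule Henstock_Kurzweil_Integration.integral_combine) (use e True phi_int in auto)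
  moreover have "integral {1..x} (phi g b) = 0"
  proof (cases "x = 1")
    case True then show ?thesis by simp
  next
    case False then have "{1..x} = {}" using \<open>x \<le> 1\<close> by auto
    then show ?thesis by simp
  qed
  ultimately show ?thesis unfolding QQ_def by linarith
next
  case False
  have "integral {e..1} (phi g b) + integral {1..x} (phi g b) = integral {e..x} (phi g b)"
    by (rule Henstock_Kurzweil_Integration.integral_combine) (use e False phi_int in auto)
  moreover have "{x..1} = {}" using False by auto
  ultimately show ?thesis unfolding QQ_def by simp
qed

lemma QQ_deriv:
  assumes t: "0 < t"
  shows "(QQ g b has_real_derivative - phi g b t) (at t)"
proof -
  define e where "e = min (t/2) 1"
  have e: "0 < e" "e \<le> 1" "e < t" using t by (auto simp: e_def)
  have d0: "((\<lambda>x. integral {e..x} (phi g b)) has_real_derivative phi g b t) (at t within {e..t+1})"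
    by (rule integral_has_real_derivative, rule continuous_on_subset[OF phi_cont]) (use e in auto)
  have d: "((\<lambda>x. integral {e..x} (phi g b)) has_real_derivative phi g b t) (at t)"
  proof -
    have eq: "at t within {e..t+1} = at t" using e by (intro at_within_Icc_at) auto
    from d0 show ?thesis by (simp only: eq)
  qed
  have ev: "\<forall>\<^sub>F x in nhds t. QQ g b x = integral {e..1} (phi g b) - integral {e..x} (phi g b)"
  proof -
    have "\<forall>\<^sub>F x in nhds t. x \<in> {e<..}"
      using e by (intro eventually_nhds_in_open) auto
    then show ?thesis by eventually_elim (use e in \<open>auto intro!: QQ_repr\<close>)
  qed
  have "((\<lambda>x. integral {e..1} (phi g b) - integral {e..x} (phi g b)) has_real_derivative - phi g b t) (at t)"
    using DERIV_diff[OF DERIV_const d] by simp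
  then show ?thesis
    using DERIV_cong_ev[OF refl ev refl] by blast
qed

lemma QQ_cont: "continuous_on {0<..} (QQ g b)"
  by (metis DERIV_isCont QQ_deriv continuous_at_imp_continuous_on greaterThan_iff)

lemma QQ_antimono:
  assumes "0 < x" "x \<le> y" shows "QQ g b y \<le> QQ g b x"
proof (rule DERIV_nonpos_imp_nonincreasing[OF assms(2)])
  fix z assume "x \<le> z" "z \<le> y"
  then have "0 < z" using assms by auto
  then show "\<exists>y. (QQ g b has_real_derivative y) (at z) \<and> y \<le> 0"
    using QQ_deriv phi_nn by fastforce
qed

lemma tl_deriv:
  assumes t: "0 < t"
  shows "(tlop g b has_real_derivative (b * tlop g b t - g t) / t) (at t)"
proof -
  have d1: "((\<lambda>x. x powr b) has_real_derivative b * t powr (b - 1)) (at t)"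
    using t by (auto intro!: derivative_eq_intros)
  have d2: "((\<lambda>x. g 1 / b + QQ g b x) has_real_derivative - phi g b t) (at t)"
    using DERIV_add[OF DERIV_const QQ_deriv[OF t]] by simp
  have e: "tlop g b = (\<lambda>x. x powr b * (g 1 / b + QQ g b x))" by (rule ext) (simp add: tlop_def)
  have "(tlop g b has_real_derivative
      (b * t powr (b - 1) * (g 1 / b + QQ g b t) + - phi g b t * t powr b)) (at t)"
    unfolding e using DERIV_mult[OF d1 d2] by simp
  moreover have "b * t powr (b - 1) * (g 1 / b + QQ g b t) + - phi g b t * t powr b
      = (b * tlop g b t - g t) / t"
  proof -
    have h1: "t powr (b - 1) = t powr b / t" using t by (simp add: powr_diff)
    have h2: "t powr (-b-1) * t powr b = 1 / t" using t
      by (simp add: powr_add[symmetric] powr_minus_divide)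
    have "b * t powr (b - 1) * (g 1 / b + QQ g b t) = b * tlop g b t / t"
      unfolding h1 tlop_def by simp
    moreover have "phi g b t * t powr b = g t / t"
      unfolding phi_def using h2 by (simp add: mult.assoc)
    ultimately show ?thesis by (simp add: diff_divide_distrib)
  qed
  ultimately show ?thesis by simp
qed

lemma tl_cont: "continuous_on {0<..} (tlop g b)"
  by (metis DERIV_isCont tl_deriv continuous_at_imp_continuous_on greaterThan_iff)

lemma integral_powr_phi:
  assumes "0 < x" "x \<le> y"
  shows "integral {x..y} (\<lambda>v. c * v powr (-b-1)) = c * ((x powr (-b) - y powr (-b)) / b)"
proof -
  have e: "(y powr (-b) - x powr (-b)) / (-b) = (x powr (-b) - y powr (-b)) / b"
    by (metis minus_diff_eq minus_divide_left minus_divide_right)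
  have "((\<lambda>v. v powr ((-b) - 1)) has_integral ((y powr (-b) - x powr (-b)) / (-b))) {x..y}"
    using int_powr[OF assms, of "-b"] bpos by simp
  then have "((\<lambda>v. v powr (-b - 1)) has_integral ((x powr (-b) - y powr (-b)) / b)) {x..y}"
    unfolding e by simp
  then have "((\<lambda>v. c * v powr (-b - 1)) has_integral c * ((x powr (-b) - y powr (-b)) / b)) {x..y}"
    by (rule has_integral_mult_right)
  then show ?thesis by (rule integral_unique)
qed

lemma tl_ge1: assumes "1 \<le> t" shows "tlop g b t = g 1 / b"
proof -
  have "integral {1..t} (phi g b) = integral {1..t} (\<lambda>v. g 1 * v powr (-b-1))"
  proof (rule integral_cong)
    fix v assume "v \<in> {1..t}"
    then have "g v = g 1" by (intro gconst) auto
    then show "phi g b v = g 1 * v powr (-b-1)" by (simp add: phi_def)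
  qed
  also have "\<dots> = g 1 * ((1 - t powr (-b)) / b)"
    using integral_powr_phi[of 1 t "g 1"] assms by simp
  finally have i: "integral {1..t} (phi g b) = g 1 * ((1 - t powr (-b)) / b)" .
  have "integral {t..1} (phi g b) = 0"
  proof (cases "t = 1")
    case False then have "{t..1} = {}" using assms by auto
    then show ?thesis by simp
  qed simp
  then have "QQ g b t = - (g 1 * ((1 - t powr (-b)) / b))" unfolding QQ_def i by simp
  then have "g 1 / b + QQ g b t = g 1 * t powr (-b) / b"
    by (simp add: diff_divide_distrib right_diff_distrib)
  then have "tlop g b t = t powr b * (g 1 * t powr (-b) / b)"
    unfolding tlop_def by simp
  also have "\<dots> = g 1 / b" using assms bpos by (simp add: powr_minus)
  finally show ?thesis .
qed

lemma tl_le1: assumes "0 < t" "t \<le> 1"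
  shows "tlop g b t = t powr b * (g 1 / b + integral {t..1} (phi g b))"
proof -
  have "integral {1..t} (phi g b) = 0"
  proof (cases "t = 1")
    case False then have "{1..t} = {}" using assms by auto
    then show ?thesis by simp
  qed simp
  then show ?thesis unfolding tlop_def QQ_def by simp
qed

lemma tl_lower: assumes t: "0 < t" shows "g t / b \<le> tlop g b t"
proof (cases "1 \<le> t")
  case True then show ?thesis using tl_ge1[of t] gconst[of t] by simp
next
  case False
  have "integral {t..1} (\<lambda>v. g t * v powr (-b-1)) \<le> integral {t..1} (phi g b)"
  proof (rule integral_le)
    show "(\<lambda>v. g t * v powr (-b-1)) integrable_on {t..1}"
      by (rule integrable_continuous_interval) (use t in \<open>auto intro!: continuous_intros\<close>)
    show "phi g b integrable_on {t..1}" using phi_int t by simp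
    fix v assume "v \<in> {t..1}"
    then show "g t * v powr (-b-1) \<le> phi g b v" unfolding phi_def using t
      by (intro mult_right_mono gmono) auto
  qed
  then have "g t * ((t powr (-b) - 1) / b) \<le> integral {t..1} (phi g b)"
    using integral_powr_phi[of t 1 "g t"] t False by simp
  then have "t powr b * (g 1 / b + g t * ((t powr (-b) - 1) / b)) \<le> tlop g b t"
    unfolding tl_le1[OF t less_imp_le[OF iffD1[OF not_le False]]] using False t by (intro mult_left_mono) auto
  moreover have "t powr b * (g 1 / b + g t * ((t powr (-b) - 1) / b))
        = t powr b * (g 1 - g t) / b + g t / b"
  proof -
    have u: "t powr (-b) = 1 / t powr b" by (simp add: powr_minus_divide)
    have "t powr b > 0" using t by simp
    then show ?thesis unfolding u using bpos by (simp add: field_simps)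
  qed
  moreover have "0 \<le> t powr b * (g 1 - g t) / b"
    using gmono[of t 1] False t bpos by simp
  ultimately show ?thesis by linarith
qed

lemma tl_nonneg: "0 < t \<Longrightarrow> 0 \<le> tlop g b t"
  using tl_lower[of t] gnn[of t] bpos by (smt (verit) divide_nonneg_pos)

lemma tl_ratio:
  assumes "0 < t" "t \<le> u" shows "tlop g b u \<le> (u / t) powr b * tlop g b t"
proof -
  have "g 1 / b + QQ g b u \<le> g 1 / b + QQ g b t" using QQ_antimono assms by simp
  then have "tlop g b u \<le> u powr b * (g 1 / b + QQ g b t)"
    unfolding tlop_def by (intro mult_left_mono) auto
  also have "\<dots> = (u / t) powr b * tlop g b t"
    unfolding tlop_def using assms by (simp add: powr_divide)
  finally show ?thesis .
qed

end

context gk begin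

lemma tl_upper:
  assumes t: "0 < t" "t \<le> 1" and r: "0 \<le> r" "r < b" and z: "0 \<le> z"
    and hyp: "\<And>u. t \<le> u \<Longrightarrow> u \<le> 1 \<Longrightarrow> g u \<le> z * (u / t) powr r"
  shows "tlop g b t \<le> z / (b - r)"
proof -
  define C where "C = z * t powr (-r)"
  have C0: "0 \<le> C" using z by (simp add: C_def)
  have gu: "g u \<le> C * u powr r" if "t \<le> u" "u \<le> 1" for u
  proof -
    have "(u / t) powr r = u powr r * t powr (-r)" using t that
      by (simp add: powr_divide powr_minus_divide)
    then show ?thesis using hyp[OF that] by (simp add: C_def mult_ac)
  qed
  have I: "integral {t..1} (phi g b) \<le> integral {t..1} (\<lambda>v. C * v powr ((r - b) - 1))"
  proof (rule integral_le)
    show "phi g b integrable_on {t..1}" using phi_int t by simp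
    show "(\<lambda>v. C * v powr ((r - b) - 1)) integrable_on {t..1}"
      by (rule integrable_continuous_interval) (use t in \<open>auto intro!: continuous_intros\<close>)
    fix v assume v: "v \<in> {t..1}"
    then have vp: "0 < v" using t by auto
    have "phi g b v \<le> C * v powr r * v powr (-b-1)"
      unfolding phi_def using gu[of v] v by (intro mult_right_mono) auto
    also have "\<dots> = C * v powr ((r - b) - 1)"
    proof -
      have "(r - b) - 1 = r + (-b-1)" by simp
      then show ?thesis by (simp only: powr_add mult.assoc)
    qed
    finally show "phi g b v \<le> C * v powr ((r - b) - 1)" .
  qed
  have "((\<lambda>v. v powr ((r - b) - 1)) has_integral ((1 powr (r - b) - t powr (r - b)) / (r - b))) {t..1}"
    using int_powr[OF t, of "r - b"] r by simp
  then have "integral {t..1} (\<lambda>v. C * v powr ((r - b) - 1)) = C * ((1 - t powr (r - b)) / (r - b))"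
    by (simp add: integral_unique has_integral_mult_right)
  with I have I2: "integral {t..1} (phi g b) \<le> C * ((t powr (r - b) - 1) / (b - r))"
    by (metis minus_diff_eq minus_divide_divide)
  have g1: "g 1 \<le> C" using gu[of 1] t by simp
  have "tlop g b t \<le> t powr b * (C / b + C * ((t powr (r - b) - 1) / (b - r)))"
    unfolding tl_le1[OF t] using I2 g1 bpos by (intro mult_left_mono add_mono divide_right_mono) auto
  also have "\<dots> = z * (t powr (b - r) / b + (1 - t powr (b - r)) / (b - r))"
  proof -
    have a: "t powr b * C = z * t powr (b - r)"
    proof -
      have "b - r = b + (-r)" by simp
      then show ?thesis unfolding C_def by (simp only: powr_add mult_ac)
    qed
    have bb: "t powr b * C * t powr (r - b) = z"
    proof -
      have "t powr (b - r) * t powr (r - b) = t powr ((b - r) + (r - b))" by (simp only: powr_add)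
      then have "t powr (b - r) * t powr (r - b) = 1" using t by simp
      then show ?thesis unfolding a by (simp add: mult.assoc)
    qed
    have "t powr b * (C / b + C * ((t powr (r - b) - 1) / (b - r)))
       = (t powr b * C) / b + ((t powr b * C * t powr (r - b)) - t powr b * C) / (b - r)"
      by (simp add: algebra_simps diff_divide_distrib)
    also have "\<dots> = z * t powr (b - r) / b + (z - z * t powr (b - r)) / (b - r)"
      unfolding bb by (simp only: a)
    finally show ?thesis by (simp add: algebra_simps diff_divide_distrib)
  qed
  also have "\<dots> \<le> z * (t powr (b - r) / (b - r) + (1 - t powr (b - r)) / (b - r))"
  proof -
    have "t powr (b - r) / b \<le> t powr (b - r) / (b - r)"
      using r bpos by (intro divide_left_mono) auto
    then show ?thesis using z by (intro mult_left_mono) auto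
  qed
  also have "\<dots> = z / (b - r)" by (simp add: add_divide_distrib[symmetric])
  finally show ?thesis .
qed

lemma tl_lim0:
  assumes g0: "g 0 = 0"
  shows "(tlop g b \<longlongrightarrow> 0) (at_right 0)"
proof (rule order_tendstoI)
  fix y :: real assume y0: "y < 0"
  have "\<forall>\<^sub>F x in at_right 0. (0::real) < x" by (rule eventually_at_right_less)
  then show "\<forall>\<^sub>F x in at_right 0. y < tlop g b x"
    by (rule eventually_mono) (use tl_nonneg y0 in force)
next
  fix \<epsilon> :: real assume ep: "0 < \<epsilon>"
  have "isCont g 0 \<or> True" by simp
  have "(g \<longlongrightarrow> g 0) (at 0 within {0..})"
    using gcont by (simp add: continuous_on_def)
  then have "\<forall>\<^sub>F x in at 0 within {0..}. g x < b * \<epsilon> / 2"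
    using g0 ep bpos by (intro order_tendstoD) auto
  then obtain d where d: "0 < d" "\<And>x. x \<in> {0..} \<Longrightarrow> x \<noteq> 0 \<Longrightarrow> dist x 0 < d \<Longrightarrow> g x < b * \<epsilon> / 2"
    unfolding eventually_at by auto
  define \<delta> where "\<delta> = min (d/2) 1"
  have dl: "0 < \<delta>" "\<delta> \<le> 1" "\<delta> < d" using d by (auto simp: \<delta>_def)
  have gd: "g \<delta> < b * \<epsilon> / 2" using d(2)[of \<delta>] dl by auto
  define C where "C = g 1 / b + integral {\<delta>..1} (phi g b)"
  have "((\<lambda>x. x powr b * C) \<longlongrightarrow> 0 powr b * C) (at_right 0)"
    using bpos by (intro tendsto_intros) (auto intro: eventually_mono[OF eventually_at_right_less])
  then have "\<forall>\<^sub>F x in at_right 0. x powr b * C < \<epsilon> / 2"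
    using bpos ep by (intro order_tendstoD) auto
  moreover have "\<forall>\<^sub>F x in at_right 0. x < \<delta>"
    using dl by (auto simp: eventually_at_right_field intro!: exI[of _ \<delta>])
  ultimately have "\<forall>\<^sub>F x in at_right 0. x powr b * C < \<epsilon> / 2 \<and> x < \<delta> \<and> 0 < x"
    by (auto simp: eventually_conj_iff eventually_at_right_field)
  then show "\<forall>\<^sub>F x in at_right 0. tlop g b x < \<epsilon>"
  proof eventually_elim
    case (elim t)
    then have t: "0 < t" "t < \<delta>" "t powr b * C < \<epsilon> / 2" by auto
    have split: "integral {t..\<delta>} (phi g b) + integral {\<delta>..1} (phi g b) = integral {t..1} (phi g b)"
      by (rule Henstock_Kurzweil_Integration.integral_combine) (use t dl phi_int in auto)
    have "integral {t..\<delta>} (phi g b) \<le> integral {t..\<delta>} (\<lambda>v. g \<delta> * v powr (-b-1))"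
    proof (rule integral_le)
      show "phi g b integrable_on {t..\<delta>}" using phi_int t by simp
      show "(\<lambda>v. g \<delta> * v powr (-b-1)) integrable_on {t..\<delta>}"
        by (rule integrable_continuous_interval) (use t in \<open>auto intro!: continuous_intros\<close>)
      fix v assume "v \<in> {t..\<delta>}"
      then show "phi g b v \<le> g \<delta> * v powr (-b-1)" unfolding phi_def using t
        by (intro mult_right_mono gmono) auto
    qed
    also have "\<dots> = g \<delta> * ((t powr (-b) - \<delta> powr (-b)) / b)"
      using integral_powr_phi[of t \<delta> "g \<delta>"] t by simp
    also have "\<dots> \<le> g \<delta> * (t powr (-b) / b)"
      using gnn[of \<delta>] dl bpos by (intro mult_left_mono divide_right_mono) auto
    finally have i1: "integral {t..\<delta>} (phi g b) \<le> g \<delta> * (t powr (-b) / b)" .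
    have "tlop g b t = t powr b * C + t powr b * integral {t..\<delta>} (phi g b)"
      unfolding tl_le1[OF t(1) less_imp_le[OF less_le_trans[OF t(2) dl(2)]]] C_def split[symmetric]
      by (simp add: algebra_simps)
    also have "\<dots> \<le> t powr b * C + t powr b * (g \<delta> * (t powr (-b) / b))"
      using i1 by (intro add_left_mono mult_left_mono) auto
    also have "t powr b * (g \<delta> * (t powr (-b) / b)) = g \<delta> / b"
      using t bpos by (simp add: powr_minus_divide)
    also have "g \<delta> / b < \<epsilon> / 2" using gd bpos by (simp add: pos_divide_less_eq mult.commute)
    finally show ?case using t by linarith
  qed
qed

end

definition avg :: "(real \<Rightarrow> real) \<Rightarrow> real \<Rightarrow> real" where
  "avg g t = integral {0..t} g / t"

context gk begin

lemma g_int: "g integrable_on {0..t}"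
  by (rule integrable_continuous_interval, rule continuous_on_subset[OF gcont]) auto

lemma avg_deriv:
  assumes t: "0 < t"
  shows "(avg g has_real_derivative (g t - avg g t) / t) (at t)"
proof -
  have d0: "((\<lambda>x. integral {0..x} g) has_real_derivative g t) (at t within {0..t+1})"
    by (rule integral_has_real_derivative, rule continuous_on_subset[OF gcont]) (use t in auto)
  have eq: "at t within {0..t+1} = at t" using t by (intro at_within_Icc_at) auto
  have d: "((\<lambda>x. integral {0..x} g) has_real_derivative g t) (at t)"
    using d0 by (simp only: eq)
  have e: "avg g = (\<lambda>x. integral {0..x} g / x)" by (rule ext) (simp add: avg_def)
  have "(avg g has_real_derivative (g t * t - integral {0..t} g * 1) / (t * t)) (at t)"
    unfolding e using DERIV_divide[OF d DERIV_ident] t by simp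
  moreover have "(g t * t - integral {0..t} g * 1) / (t * t) = (g t - avg g t) / t"
    using t by (simp add: avg_def diff_divide_distrib)
  ultimately show ?thesis by simp
qed

lemma avg_nn: "0 < t \<Longrightarrow> 0 \<le> avg g t"
  unfolding avg_def using gnn by (intro divide_nonneg_pos integral_nonneg g_int) auto

lemma avg_le: assumes t: "0 < t" shows "avg g t \<le> g t"
proof -
  have "integral {0..t} g \<le> integral {0..t} (\<lambda>_. g t)"
    by (rule integral_le[OF g_int]) (use gmono t in auto)
  also have "\<dots> = t * g t" using t by simp
  finally show ?thesis unfolding avg_def using t by (simp add: pos_divide_le_eq mult.commute)
qed

lemma avg_cont: "continuous_on {0<..} (avg g)"
  by (metis DERIV_isCont avg_deriv continuous_at_imp_continuous_on greaterThan_iff)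

lemma hardy:
  assumes int: "set_integrable lborel {0<..1} (\<lambda>t. g t / t)"
  shows "set_integrable lborel {0<..1} (\<lambda>t. tlop g b t / t)"
proof -
  define L where "L = integral {0<..1} (\<lambda>t. g t / t)"
  have intHK: "(\<lambda>t. g t / t) integrable_on {0<..1}"
    using set_borel_integral_eq_integral(1)[OF int] .
  show ?thesis
  proof (rule setint_from_bounded[where B = "(g 1 / b + L) / b"])
    show "continuous_on {0<..1} (\<lambda>t. tlop g b t / t)"
      by (intro continuous_intros continuous_on_subset[OF tl_cont]) auto
    show "0 \<le> tlop g b t / t" if "t \<in> {0<..1}" for t
      using tl_nonneg[of t] that by simp
    fix e :: real assume e: "0 < e" "e \<le> 1"
    have ftc: "((\<lambda>t. (b * tlop g b t - g t) / t) has_integral (tlop g b 1 - tlop g b e)) {e..1}"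
    proof (rule fundamental_theorem_of_calculus)
      show "e \<le> 1" by fact
      fix x assume "x \<in> {e..1}"
      then have "0 < x" using e by auto
      then show "(tlop g b has_vector_derivative (b * tlop g b x - g x) / x) (at x within {e..1})"
        using tl_deriv[of x] by (simp add: has_real_derivative_iff_has_vector_derivative[symmetric] has_field_derivative_at_within)
    qed
    have gi: "(\<lambda>t. g t / t) integrable_on {e..1}"
      by (rule integrable_on_subinterval[OF intHK]) (use e in auto)
    have "((\<lambda>t. (1 / b) * ((b * tlop g b t - g t) / t) + (1 / b) * (g t / t)) has_integral
        (1 / b) * (tlop g b 1 - tlop g b e) + (1 / b) * integral {e..1} (\<lambda>t. g t / t)) {e..1}"
      by (rule has_integral_add[OF has_integral_mult_right[OF ftc] has_integral_mult_right[OF integrable_integral[OF gi]]])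
    moreover have "(\<lambda>t. (1 / b) * ((b * tlop g b t - g t) / t) + (1 / b) * (g t / t)) = (\<lambda>t. tlop g b t / t)"
      apply (rule ext)
      subgoal for t using bpos by (simp add: diff_divide_distrib add_divide_distrib)
      done
    ultimately have "integral {e..1} (\<lambda>t. tlop g b t / t)
        = (1 / b) * (tlop g b 1 - tlop g b e) + (1 / b) * integral {e..1} (\<lambda>t. g t / t)"
      by (simp add: integral_unique)
    also have "\<dots> \<le> (1 / b) * (g 1 / b) + (1 / b) * L"
    proof -
      have "tlop g b 1 - tlop g b e \<le> g 1 / b" using tl_ge1[of 1] tl_nonneg[of e] e by simp
      moreover have "integral {e..1} (\<lambda>t. g t / t) \<le> L"
        unfolding L_def
      proof (rule integral_subset_le[OF _ gi intHK])
        show "{e..1} \<subseteq> {0<..1}" using e by auto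
        show "\<forall>x\<in>{0<..1}. 0 \<le> g x / x" using gnn by simp
      qed
      ultimately show ?thesis using bpos by (intro add_mono mult_left_mono) auto
    qed
    also have "\<dots> = (g 1 / b + L) / b" by (simp add: add_divide_distrib)
    finally show "integral {e..1} (\<lambda>t. tlop g b t / t) \<le> (g 1 / b + L) / b" .
  qed
qed

end

locale phk =
  fixes \<Phi> :: "real \<Rightarrow> real" and c q :: real
  assumes Pcont: "continuous_on {0..} \<Phi>"
    and Pmono: "\<And>x y. 0 \<le> x \<Longrightarrow> x \<le> y \<Longrightarrow> \<Phi> x \<le> \<Phi> y"
    and P0: "\<Phi> 0 = 0"
    and Pup: "\<And>l x. 1 \<le> l \<Longrightarrow> 0 \<le> x \<Longrightarrow> \<Phi> (l * x) \<le> l * \<Phi> x"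
    and Plow: "\<And>l x. 1 \<le> l \<Longrightarrow> 0 \<le> x \<Longrightarrow> c * l powr q * \<Phi> x \<le> \<Phi> (l * x)"
    and cpos: "0 < c" and qpos: "0 < q"
begin

lemma Pnn: "0 \<le> x \<Longrightarrow> 0 \<le> \<Phi> x"
  using Pmono[of 0 x] P0 by simp

lemma phi_tl:
  assumes f: "gk f a" and a1: "a \<le> 1"
    and int: "set_integrable lborel {0<..1} (\<lambda>t. \<Phi> (f t) / t)"
  shows "set_integrable lborel {0<..1} (\<lambda>t. \<Phi> (tlop f a t) / t)"
proof -
  interpret F: gk f a by (rule f)
  define b where "b = a * q / 4"
  define r where "r = a / 2"
  define D where "D = 4 / a"
  define K where "K = tlop (\<lambda>t. \<Phi> (f t)) b"
  have apos: "0 < a" using F.bpos .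
  have bpos: "0 < b" unfolding b_def using apos qpos by simp
  have D1: "1 \<le> D" unfolding D_def using apos a1 by simp
  have G: "gk (\<lambda>t. \<Phi> (f t)) b"
  proof
    show "continuous_on {0..} (\<lambda>t. \<Phi> (f t))"
      by (rule continuous_on_compose2[OF Pcont F.gcont]) (use F.gnn in auto)
    show "\<Phi> (f x) \<le> \<Phi> (f y)" if "0 \<le> x" "x \<le> y" for x y
      using Pmono F.gmono F.gnn that by auto
    show "0 \<le> \<Phi> (f x)" if "0 \<le> x" for x using Pnn F.gnn that by auto
    show "\<Phi> (f x) = \<Phi> (f 1)" if "1 \<le> x" for x using F.gconst[OF that] by simp
  qed (use bpos in auto)
  interpret G: gk "\<lambda>t. \<Phi> (f t)" b by (rule G)
  have Kint: "set_integrable lborel {0<..1} (\<lambda>t. K t / t)"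
    unfolding K_def by (rule G.hardy[OF int])
  have point: "\<Phi> (tlop f a t) \<le> D * (b / c) * K t" if t: "0 < t" "t \<le> 1" for t
  proof -
    define J where "J = tlop f a t"
    define z where "z = J / D"
    have J0: "0 \<le> J" unfolding J_def using F.tl_nonneg t by simp
    have z0: "0 \<le> z" unfolding z_def using J0 D1 by simp
    have K0: "0 \<le> K t" unfolding K_def using G.tl_nonneg t by simp
    show ?thesis
    proof (cases "\<Phi> z \<le> (b / c) * K t")
      case True
      have "\<Phi> J = \<Phi> (D * z)" unfolding z_def using D1 by simp
      also have "\<dots> \<le> D * \<Phi> z" by (rule Pup[OF D1 z0])
      also have "\<dots> \<le> D * ((b / c) * K t)" using True D1 by (intro mult_left_mono) auto
      finally show ?thesis unfolding J_def by (simp add: mult.assoc)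
    next
      case False
      have bound: "f u \<le> z * (u / t) powr r" if u: "t \<le> u" "u \<le> 1" for u
      proof (rule ccontr)
        assume "\<not> ?thesis"
        then have less: "z * (u / t) powr r < f u" by simp
        define l where "l = (u / t) powr r"
        define m where "m = (u / t) powr b"
        have ut: "1 \<le> u / t" using u t by simp
        have l1: "1 \<le> l" unfolding l_def using ut r_def apos by (simp add: ge_one_powr_ge_zero)
        have m1: "1 \<le> m" unfolding m_def using ut bpos by (simp add: ge_one_powr_ge_zero)
        have lq: "l powr q = m * m"
        proof -
          have "l powr q = (u / t) powr (r * q)" unfolding l_def by (simp add: powr_powr)
          also have "r * q = b + b" unfolding r_def b_def by simp
          also have "(u / t) powr (b + b) = m * m" unfolding m_def by (simp only: powr_add)
          finally show ?thesis .
        qed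
        have "c * (m * m) * \<Phi> z \<le> \<Phi> (l * z)" using Plow[OF l1 z0] lq by simp
        also have "\<dots> \<le> \<Phi> (f u)" using less l1 z0 by (intro Pmono) (auto simp: l_def mult.commute)
        also have "\<dots> \<le> b * K u"
          using G.tl_lower[of u] t u bpos unfolding K_def by (simp add: pos_divide_le_eq mult.commute)
        also have "\<dots> \<le> b * (m * K t)"
          using G.tl_ratio[of t u] t u bpos unfolding K_def m_def by (intro mult_left_mono) auto
        finally have "c * (m * m) * \<Phi> z \<le> b * (m * K t)" .
        then have "m * (c * m * \<Phi> z) \<le> m * (b * K t)" by (simp add: mult_ac)
        then have "c * m * \<Phi> z \<le> b * K t" using m1 by simp
        moreover have "c * \<Phi> z \<le> c * m * \<Phi> z"
          using m1 cpos Pnn[OF z0] by (simp add: mult_right_mono)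
        ultimately have "c * \<Phi> z \<le> b * K t" by linarith
        then have "\<Phi> z \<le> (b / c) * K t" using cpos by (simp add: field_simps)
        with False show False by simp
      qed
      have "J \<le> z / (a - r)"
        unfolding J_def
        by (rule F.tl_upper[OF t _ _ z0 bound]) (use apos in \<open>auto simp: r_def\<close>)
      also have "z / (a - r) = J / 2" unfolding z_def D_def r_def using apos by simp
      finally have "J = 0" using J0 by simp
      then show ?thesis unfolding J_def[symmetric] using P0 D1 bpos cpos K0 by simp
    qed
  qed
  have meas: "set_borel_measurable lborel {0<..1} (\<lambda>t. \<Phi> (tlop f a t) / t)"
  proof -
    have "continuous_on {0<..1} (\<lambda>t. \<Phi> (tlop f a t) / t)"
    proof (intro continuous_intros)
      show "continuous_on {0<..1} (\<lambda>t. \<Phi> (tlop f a t))"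
        by (rule continuous_on_compose2[OF Pcont continuous_on_subset[OF F.tl_cont]])
           (use F.tl_nonneg in auto)
    qed auto
    then show ?thesis unfolding set_borel_measurable_def measurable_lborel2
      by (intro borel_measurable_continuous_on_indicator) auto
  qed
  show ?thesis
  proof (rule set_integrable_bound[OF _ meas])
    show "set_integrable lborel {0<..1} (\<lambda>t. (D * (b / c)) * (K t / t))"
      by (rule set_integrable_mult_right[OF Kint])
    show "AE x in lborel. x \<in> {0<..1} \<longrightarrow> norm (\<Phi> (tlop f a x) / x) \<le> norm (D * (b / c) * (K x / x))"
    proof (rule AE_I2, rule impI)
      fix x :: real assume x: "x \<in> {0<..1}"
      have "0 \<le> \<Phi> (tlop f a x)" using Pnn F.tl_nonneg x by simp
      moreover have "0 \<le> K x" unfolding K_def using G.tl_nonneg x by simp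
      moreover have "\<Phi> (tlop f a x) / x \<le> D * (b / c) * K x / x"
        using divide_right_mono[OF point[of x], of x] x by simp
      ultimately show "norm (\<Phi> (tlop f a x) / x) \<le> norm (D * (b / c) * (K x / x))"
        using x D1 bpos cpos by simp
    qed
  qed
qed

end

definition ff :: "(real \<Rightarrow> real) \<Rightarrow> real \<Rightarrow> real" where
  "ff wb u = wb (min u 1) + min u 1"

definition W0 :: "(real \<Rightarrow> real) \<Rightarrow> real \<Rightarrow> real \<Rightarrow> real \<Rightarrow> real" where
  "W0 wb a c t = tlop (ff wb) a t + avg (ff wb) t + c * t"

definition ww :: "(real \<Rightarrow> real) \<Rightarrow> real \<Rightarrow> real \<Rightarrow> real \<Rightarrow> real" where
  "ww wb a c t = (if t = 0 then 0 else W0 wb a c t)"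

locale con =
  fixes wb :: "real \<Rightarrow> real" and \<iota> c :: real
  assumes adm: "admissible_modulus wb" and i0: "0 < \<iota>" and i1: "\<iota> < 1/3"
    and c1: "1 \<le> c" and cb: "\<And>t. 1 \<le> t \<Longrightarrow> wb t \<le> c * t"
begin

abbreviation "a \<equiv> \<iota> / 2"
abbreviation "f \<equiv> ff wb"
abbreviation "w \<equiv> ww wb a c"
abbreviation "T \<equiv> tlop f a"
abbreviation "V \<equiv> avg f"

lemma wbcont: "continuous_on {0..} wb" and wbmono: "\<And>x y. 0 \<le> x \<Longrightarrow> x \<le> y \<Longrightarrow> wb x \<le> wb y"
  and wb0: "wb 0 = 0" and wbnn: "\<And>x. 0 \<le> x \<Longrightarrow> 0 \<le> wb x"
  using adm unfolding admissible_modulus_def mono_on_def by auto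

lemma apos: "0 < a" and a1: "a < 1" using i0 i1 by auto

lemma fgk: "gk f a"
proof
  have "continuous_on {0..} (\<lambda>u. wb (min u 1))"
    by (rule continuous_on_compose2[OF wbcont]) (auto intro!: continuous_intros)
  then show "continuous_on {0..} f" unfolding ff_def[abs_def] by (intro continuous_intros)
  show "f x \<le> f y" if "0 \<le> x" "x \<le> y" for x y
  proof -
    have m: "min x 1 \<le> min y 1" using that by auto
    have "wb (min x 1) \<le> wb (min y 1)" by (rule wbmono) (use that m in auto)
    then show ?thesis unfolding ff_def using m by simp
  qed
  show "0 \<le> f x" if "0 \<le> x" for x unfolding ff_def using wbnn[of "min x 1"] that by auto
  show "f x = f 1" if "1 \<le> x" for x unfolding ff_def using that by auto
qed (use apos in auto)

sublocale F: gk f a by (rule fgk)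

lemma f0: "f 0 = 0" by (simp add: ff_def wb0)
lemma f1: "1 \<le> f 1" unfolding ff_def using wbnn[of 1] by simp
lemma fwb: "0 \<le> t \<Longrightarrow> t \<le> 1 \<Longrightarrow> f t = wb t + t" by (simp add: ff_def)

definition W1 where "W1 t = (a * T t - V t) / t + c"
definition W2 where "W2 t = (a * (a - 1) * T t + 2 * V t - (a + 1) * f t) / t^2"

lemma TV: "0 < t \<Longrightarrow> f t \<le> a * T t" "0 < t \<Longrightarrow> 0 \<le> V t" "0 < t \<Longrightarrow> V t \<le> f t" "0 < t \<Longrightarrow> 0 \<le> f t"
  using F.tl_lower[of t] apos F.avg_nn[of t] F.avg_le[of t] F.gnn[of t]
  by (auto simp: pos_divide_le_eq mult.commute)

lemma W0_deriv: "0 < t \<Longrightarrow> (W0 wb a c has_real_derivative W1 t) (at t)"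
proof -
  assume t: "0 < t"
  have e: "W0 wb a c = (\<lambda>x. T x + V x + c * x)" by (rule ext) (simp add: W0_def)
  have "(W0 wb a c has_real_derivative (a * T t - f t) / t + (f t - V t) / t + c * 1) (at t)"
    unfolding e by (intro DERIV_add F.tl_deriv F.avg_deriv DERIV_cmult DERIV_ident t)
  moreover have "(a * T t - f t) / t + (f t - V t) / t + c * 1 = W1 t"
    unfolding W1_def by (simp add: diff_divide_distrib)
  ultimately show ?thesis by simp
qed

lemma W1_deriv: "0 < t \<Longrightarrow> (W1 has_real_derivative W2 t) (at t)"
proof -
  assume t: "0 < t"
  have e: "W1 = (\<lambda>x. (a * T x - V x) / x + c)" by (rule ext) (simp add: W1_def)
  have "(W1 has_real_derivative
     ((a * ((a * T t - f t) / t) - (f t - V t) / t) * t - (a * T t - V t) * 1) / (t * t) + 0) (at t)"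
    unfolding e
    by (intro DERIV_add DERIV_divide DERIV_diff DERIV_cmult F.tl_deriv F.avg_deriv DERIV_ident DERIV_const t)
       (use t in simp)
  moreover have "((a * ((a * T t - f t) / t) - (f t - V t) / t) * t - (a * T t - V t) * 1) / (t * t) + 0 = W2 t"
  proof -
    have "(a * ((a * T t - f t) / t) - (f t - V t) / t) * t = a * (a * T t - f t) - (f t - V t)"
      using t by (simp add: diff_divide_distrib algebra_simps)
    then show ?thesis unfolding W2_def power2_eq_square
      by (simp add: algebra_simps)
  qed
  ultimately show ?thesis by simp
qed

lemma W2_cont: "continuous_on {0<..} W2"
proof -
  have "continuous_on {0<..} f" by (rule continuous_on_subset[OF F.gcont]) auto
  then show ?thesis unfolding W2_def[abs_def]
    by (intro continuous_intros F.tl_cont F.avg_cont) auto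
qed

lemma w_eq: "0 < x \<Longrightarrow> w x = W0 wb a c x" by (simp add: ww_def)

lemma ev_pos: "0 < (t::real) \<Longrightarrow> \<forall>\<^sub>F x in nhds t. 0 < x"
proof -
  assume t: "0 < t"
  have "\<forall>\<^sub>F x in nhds t. x \<in> {0<..}" using t by (intro eventually_nhds_in_open) auto
  then show ?thesis by eventually_elim simp
qed

lemma w_deriv: "0 < t \<Longrightarrow> (w has_real_derivative W1 t) (at t)"
proof -
  assume t: "0 < t"
  have "\<forall>\<^sub>F x in nhds t. w x = W0 wb a c x"
    using ev_pos[OF t] by eventually_elim (simp add: ww_def)
  then show ?thesis using W0_deriv[OF t] DERIV_cong_ev[OF refl _ refl] by blast
qed

lemma deriv_w: "0 < t \<Longrightarrow> deriv w t = W1 t"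
  using w_deriv by (rule DERIV_imp_deriv)

lemma dw_deriv: "0 < t \<Longrightarrow> (deriv w has_real_derivative W2 t) (at t)"
proof -
  assume t: "0 < t"
  have "\<forall>\<^sub>F x in nhds t. deriv w x = W1 x"
    using ev_pos[OF t] by eventually_elim (simp add: deriv_w)
  then show ?thesis using W1_deriv[OF t] DERIV_cong_ev[OF refl _ refl] by blast
qed

lemma deriv2_w: "0 < t \<Longrightarrow> deriv (deriv w) t = W2 t"
  using dw_deriv by (rule DERIV_imp_deriv)

lemma W1_pos: "0 < t \<Longrightarrow> 0 < W1 t"
proof -
  assume t: "0 < t"
  have "0 \<le> (a * T t - V t) / t" using TV[OF t] t by simp
  then show ?thesis unfolding W1_def using c1 by simp
qed

lemma W2_nonpos: "0 < t \<Longrightarrow> W2 t \<le> 0"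
proof -
  assume t: "0 < t"
  have "(a - 1) * (a * T t) \<le> (a - 1) * f t"
    using TV[OF t] a1 by (intro mult_left_mono_neg) auto
  then have h: "a * (a - 1) * T t \<le> (a - 1) * f t" by (simp add: mult_ac)
  have "a * (a - 1) * T t + 2 * V t - (a + 1) * f t \<le> (a - 1) * f t + 2 * V t - (a + 1) * f t"
    using h by simp
  also have "\<dots> = 2 * V t - 2 * f t" by (simp add: algebra_simps)
  also have "\<dots> \<le> 0" using TV[OF t] by simp
  finally have "a * (a - 1) * T t + 2 * V t - (a + 1) * f t \<le> 0" .
  then show ?thesis unfolding W2_def by (rule divide_nonpos_nonneg) simp
qed

lemma W0_nn: "0 < t \<Longrightarrow> c * t \<le> W0 wb a c t"
  unfolding W0_def using F.tl_nonneg[of t] TV by auto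

lemma w_nn: "0 \<le> t \<Longrightarrow> 0 \<le> w t"
  using W0_nn[of t] c1 by (cases "t = 0") (auto simp: ww_def intro: order_trans[rotated])

lemma w_ge: "0 \<le> t \<Longrightarrow> wb t \<le> w t"
proof -
  assume t: "0 \<le> t"
  show ?thesis
  proof (cases "t = 0")
    case True then show ?thesis by (simp add: ww_def wb0)
  next
    case False
    then have tp: "0 < t" using t by simp
    show ?thesis
    proof (cases "t \<le> 1")
      case True
      have "wb t \<le> f t" using fwb[OF t True] t by simp
      also have "f t \<le> T t"
      proof -
        have "f t / a \<le> T t" by (rule F.tl_lower[OF tp])
        moreover have "f t \<le> f t / a"
        proof -
          have "f t * a \<le> f t * 1" by (intro mult_left_mono) (use TV(4)[OF tp] a1 in auto)
          then show ?thesis using apos by (simp add: le_divide_eq)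
        qed
        ultimately show ?thesis by linarith
      qed
      also have "T t \<le> W0 wb a c t" unfolding W0_def using TV[OF tp] c1 tp by simp
      finally show ?thesis using tp by (simp add: ww_def)
    next
      case False
      then have "wb t \<le> c * t" using cb by simp
      also have "\<dots> \<le> w t" using W0_nn[OF tp] tp by (simp add: ww_def)
      finally show ?thesis .
    qed
  qed
qed

lemma w_lim0: "(w \<longlongrightarrow> 0) (at_right 0)"
proof -
  have "((\<lambda>x. T x + V x + c * x) \<longlongrightarrow> 0 + 0 + c * 0) (at_right 0)"
  proof (intro tendsto_intros F.tl_lim0 f0)
    show "(V \<longlongrightarrow> 0) (at_right 0)"
    proof (rule tendsto_sandwich[of "\<lambda>_. 0" _ _ f])
      show "\<forall>\<^sub>F n in at_right 0. 0 \<le> V n"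
        by (rule eventually_mono[OF eventually_at_right_less]) (use TV in auto)
      show "\<forall>\<^sub>F n in at_right 0. V n \<le> f n"
        by (rule eventually_mono[OF eventually_at_right_less]) (use TV in auto)
      have "(f \<longlongrightarrow> f 0) (at 0 within {0..})"
        using F.gcont by (simp add: continuous_on_def)
      then show "(f \<longlongrightarrow> 0) (at_right 0)" using f0 by (simp add: at_within_Ici_at_right)
    qed simp
  qed
  then have "((\<lambda>x. T x + V x + c * x) \<longlongrightarrow> 0) (at_right 0)" by simp
  then show ?thesis
  proof (rule tendsto_cong[THEN iffD1, rotated])
    show "\<forall>\<^sub>F x in at_right 0. T x + V x + c * x = w x"
      by (rule eventually_mono[OF eventually_at_right_less]) (simp add: ww_def W0_def)
  qed
qed

lemma w_cont: "continuous_on {0..} w"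
proof (rule continuous_on_eq_continuous_within[THEN iffD2], rule ballI)
  fix x :: real assume x: "x \<in> {0..}"
  show "continuous (at x within {0..}) w"
  proof (cases "x = 0")
    case True
    have "(w \<longlongrightarrow> w 0) (at 0 within {0..})"
      using w_lim0 by (simp add: at_within_Ici_at_right ww_def)
    then show ?thesis using True by (simp add: continuous_within)
  next
    case False
    then have "0 < x" using x by simp
    then show ?thesis using w_deriv
      by (meson DERIV_isCont continuous_at_imp_continuous_within)
  qed
qed

end

context con begin

lemma w_smono: "strict_mono_on {0..} w"
proof (rule strict_mono_onI)
  fix x y :: real assume x: "x \<in> {0..}" and y: "y \<in> {0..}" and xy: "x < y"
  show "w x < w y"
  proof (cases "x = 0")
    case True
    then have yp: "0 < y" using xy by simp
    have "0 < c * y" using c1 yp by simp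
    also have "\<dots> \<le> w y" using W0_nn[OF yp] yp by (simp add: ww_def)
    finally show ?thesis using True by (simp add: ww_def)
  next
    case False
    then have xp: "0 < x" using x by simp
    show ?thesis
    proof (rule DERIV_pos_imp_increasing[OF xy])
      fix z assume "x \<le> z" "z \<le> y"
      then have "0 < z" using xp by simp
      then show "\<exists>d. (w has_real_derivative d) (at z) \<and> 0 < d"
        using w_deriv W1_pos by blast
    qed
  qed
qed

lemma W1_antimono: "0 < x \<Longrightarrow> x \<le> y \<Longrightarrow> W1 y \<le> W1 x"
proof -
  assume xp: "0 < x" and xy: "x \<le> y"
  show ?thesis
  proof (rule DERIV_nonpos_imp_nonincreasing[OF xy])
    fix z assume "x \<le> z" "z \<le> y"
    then have "0 < z" using xp by simp
    then show "\<exists>d. (W1 has_real_derivative d) (at z) \<and> d \<le> 0"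
      using W1_deriv W2_nonpos by blast
  qed
qed

lemma w_concave_pos: "concave_on {0<..} w"
  unfolding concave_on_def
proof (rule convex_on_realI[where f' = "\<lambda>x. - W1 x"])
  show "connected ({0<..} :: real set)" by simp
  fix x :: real assume "x \<in> {0<..}"
  then show "((\<lambda>x. - w x) has_real_derivative - W1 x) (at x)"
    using w_deriv by (intro DERIV_minus) auto
next
  fix x y :: real assume "x \<in> {0<..}" "y \<in> {0<..}" "x \<le> y"
  then show "- W1 x \<le> - W1 y" using W1_antimono by auto
qed

lemma w_ratio: "0 < s \<Longrightarrow> s \<le> y \<Longrightarrow> w y / y \<le> w s / s"
proof -
  assume sp: "0 < s" and sy: "s \<le> y"
  have "W0 wb a c y / y \<le> W0 wb a c s / s"
  proof (rule DERIV_nonpos_imp_nonincreasing[OF sy])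
    fix z assume "s \<le> z" "z \<le> y"
    then have zp: "0 < z" using sp by simp
    have d: "((\<lambda>x. W0 wb a c x / x) has_real_derivative (W1 z * z - W0 wb a c z * 1) / (z * z)) (at z)"
      using zp by (intro DERIV_divide W0_deriv DERIV_ident) auto
    have "W1 z * z - W0 wb a c z = (a - 1) * T z - 2 * V z"
      unfolding W1_def W0_def using zp by (simp add: algebra_simps diff_divide_distrib)
    also have "\<dots> \<le> 0"
    proof -
      have "(a - 1) * T z \<le> 0" by (rule mult_nonpos_nonneg) (use a1 F.tl_nonneg[OF zp] in auto)
      then show ?thesis using TV[OF zp] by linarith
    qed
    finally have "(W1 z * z - W0 wb a c z * 1) / (z * z) \<le> 0" by (simp add: divide_nonpos_nonneg)
    then show "\<exists>d. ((\<lambda>x. W0 wb a c x / x) has_real_derivative d) (at z) \<and> d \<le> 0"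
      using d by blast
  qed
  then show ?thesis using sp sy by (simp add: ww_def)
qed

lemma w_concave: "concave_on {0..} w"
  unfolding concave_on_def
proof (rule convex_on_linorderI)
  show "convex {0::real..}" by simp
  fix t x y :: real assume t: "0 < t" "t < 1" and x: "x \<in> {0..}" and y: "y \<in> {0..}" and xy: "x < y"
  show "- w ((1 - t) *\<^sub>R x + t *\<^sub>R y) \<le> (1 - t) * - w x + t * - w y"
  proof (cases "x = 0")
    case True
    then have yp: "0 < y" using xy by simp
    have tyy: "t * y \<le> y" using t yp by simp
    have "w y / y \<le> w (t * y) / (t * y)" using w_ratio[of "t * y" y] t yp tyy by simp
    then have "t * w y \<le> w (t * y)" using t yp by (simp add: field_simps)
    then show ?thesis using True by (simp add: ww_def)
  next
    case False
    then have "x \<in> {0<..}" "y \<in> {0<..}" using x xy by auto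
    then have "(1 - t) * w x + t * w y \<le> w ((1 - t) *\<^sub>R x + t *\<^sub>R y)"
      using w_concave_pos t unfolding concave_on_iff by (auto)
    then show ?thesis by simp
  qed
qed

lemma ode: "0 < t \<Longrightarrow> - w t - 3 * t * deriv w t \<le> t^2 * deriv (deriv w) t"
proof -
  assume tp: "0 < t"
  have B: "t^2 * W2 t = a * (a - 1) * T t + 2 * V t - (a + 1) * f t"
    unfolding W2_def using tp by simp
  have e1: "t * W1 t = a * T t - V t + c * t"
    unfolding W1_def using tp by (simp add: distrib_left)
  have A: "3 * t * W1 t = 3 * (a * T t) - 3 * V t + 3 * (c * t)"
    using e1 by (simp add: algebra_simps)
  have wt: "w t = T t + V t + c * t" using tp by (simp add: ww_def W0_def)
  have C: "(a + 1) * f t \<le> (a + 1) * (a * T t)"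
    using TV[OF tp] apos by (intro mult_left_mono) auto
  have E: "a * (a - 1) * T t = (a + 1) * (a * T t) - 2 * (a * T t)" by (simp add: algebra_simps)
  have Fq: "(a + 1) * T t = a * T t + T t" by (simp add: algebra_simps)
  have G: "0 \<le> T t" using F.tl_nonneg[OF tp] .
  have H: "0 \<le> c * t" using c1 tp by simp
  have "- w t - 3 * t * W1 t \<le> t^2 * W2 t"
    unfolding B A wt using C E Fq G H TV[OF tp] by linarith
  then show ?thesis using deriv_w[OF tp] deriv2_w[OF tp] by simp
qed

end

context con begin

definition "t0 = (c + 1) powr (-2)"

lemma t0: "0 < t0" "t0 \<le> 1" unfolding t0_def using c1
  by (auto simp: powr_minus_divide intro!: ge_one_powr_ge_zero)

lemma T_lower: "0 < x \<Longrightarrow> x \<le> 1 \<Longrightarrow> x powr a \<le> a * T x"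
proof -
  assume xp: "0 < x" and x1: "x \<le> 1"
  have "T 1 \<le> (1 / x) powr a * T x" using F.tl_ratio[of x 1] xp x1 by simp
  then have "f 1 / a \<le> (1 / x) powr a * T x" using F.tl_ge1[of 1] by simp
  then have "x powr a * (f 1 / a) \<le> x powr a * ((1 / x) powr a * T x)"
    by (intro mult_left_mono) auto
  also have "\<dots> = T x" using xp by (simp add: powr_divide)
  finally have "x powr a * f 1 \<le> a * T x" using apos by (simp add: field_simps)
  moreover have "x powr a \<le> x powr a * f 1"
  proof -
    have "x powr a * 1 \<le> x powr a * f 1" by (rule mult_left_mono) (use f1 in auto)
    then show ?thesis by simp
  qed
  ultimately show ?thesis by linarith
qed

lemma small: "0 < x \<Longrightarrow> x < t0 \<Longrightarrow> c * x < x powr a"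
proof -
  assume xp: "0 < x" and xt: "x < t0"
  have x1: "x \<le> 1" using xt t0 by simp
  have "x powr (1 - a) \<le> x powr (1/2)" using xp x1 i1 by (intro powr_mono') auto
  also have "x powr (1/2) < t0 powr (1/2)" using xp xt by (intro powr_less_mono2) auto
  also have "t0 powr (1/2) = 1 / (c + 1)" unfolding t0_def using c1
    by (simp only: powr_powr) (simp add: powr_minus_divide)
  finally have "c * x powr (1 - a) < c * (1 / (c + 1))" using c1 by (intro mult_strict_left_mono) auto
  also have "\<dots> < 1" using c1 by simp
  finally have h: "c * x powr (1 - a) < 1" .
  have "c * x = c * x powr (1 - a) * x powr a"
  proof -
    have "x powr (1 - a) * x powr a = x powr ((1 - a) + a)" by (simp only: powr_add)
    then show ?thesis using xp by simp
  qed
  also have "\<dots> < 1 * x powr a" using h xp by (intro mult_strict_right_mono) auto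
  finally show ?thesis by simp
qed

lemma ratio: "strict_antimono_on {0<..<t0} (\<lambda>t. w t / t powr \<iota>)"
proof (rule monotone_onI)
  fix x y :: real assume x: "x \<in> {0<..<t0}" and y: "y \<in> {0<..<t0}" and xy: "x < y"
  define H where "H z = W0 wb a c z * z powr (-\<iota>)" for z
  have "H y < H x"
  proof (rule DERIV_neg_imp_decreasing[OF xy])
    fix z assume z: "x \<le> z" "z \<le> y"
    then have zp: "0 < z" and zt: "z < t0" using x y by auto
    have dp: "((\<lambda>z. z powr (-\<iota>)) has_real_derivative (-\<iota>) * z powr (-\<iota> - 1)) (at z)"
      using zp by (auto intro!: derivative_eq_intros)
    have d: "(H has_real_derivative W1 z * z powr (-\<iota>) + W0 wb a c z * ((-\<iota>) * z powr (-\<iota> - 1))) (at z)"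
      unfolding H_def[abs_def] using DERIV_mult[OF W0_deriv[OF zp] dp] by (simp add: mult.commute)
    have sp: "z powr (-\<iota>) = z * z powr (-\<iota> - 1)"
    proof -
      have "z powr (-\<iota>) = z powr (1 + (-\<iota> - 1))" by simp
      also have "\<dots> = z powr 1 * z powr (-\<iota> - 1)" by (simp only: powr_add)
      finally show ?thesis using zp by simp
    qed
    have "W1 z * z powr (-\<iota>) + W0 wb a c z * ((-\<iota>) * z powr (-\<iota> - 1))
        = z powr (-\<iota> - 1) * (z * W1 z - \<iota> * W0 wb a c z)"
      unfolding sp by (simp add: algebra_simps)
    moreover have "z * W1 z - \<iota> * W0 wb a c z < 0"
    proof -
      have e1: "z * W1 z = a * T z - V z + c * z"
        unfolding W1_def using zp by (simp add: distrib_left)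
      have e2: "\<iota> * W0 wb a c z = \<iota> * T z + \<iota> * V z + \<iota> * (c * z)"
        unfolding W0_def by (simp add: algebra_simps)
      have e3: "\<iota> * T z = 2 * (a * T z)" by simp
      have l: "z powr a \<le> a * T z" using T_lower zp zt t0 by simp
      have s: "c * z < z powr a" using small zp zt by simp
      have v: "0 \<le> \<iota> * V z" using TV[OF zp] i0 by simp
      have cz: "0 \<le> \<iota> * (c * z)" using c1 zp i0 by simp
      show ?thesis unfolding e1 e2 e3 using l s v cz TV[OF zp] by linarith
    qed
    moreover have "0 < z powr (-\<iota> - 1)" using zp by simp
    ultimately have "W1 z * z powr (-\<iota>) + W0 wb a c z * ((-\<iota>) * z powr (-\<iota> - 1)) < 0"
      by (simp add: mult_pos_neg)
    then show "\<exists>d. (H has_real_derivative d) (at z) \<and> d < 0" using d by blast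
  qed
  moreover have "w z / z powr \<iota> = H z" if "0 < z" for z
    using that by (simp add: H_def ww_def powr_minus_divide)
  ultimately show "w y / y powr \<iota> < w x / x powr \<iota>" using x y by simp
qed

lemma good: "good_modulus \<iota> wb w"
  unfolding good_modulus_def
proof (intro conjI allI impI)
  show "continuous_on {0..} w" by (rule w_cont)
  show "strict_mono_on {0..} w" by (rule w_smono)
  show "concave_on {0..} w" by (rule w_concave)
  show "0 \<le> w t" if "0 \<le> t" for t using w_nn that by simp
  show "w 0 = 0" by (simp add: ww_def)
  show "w differentiable at t" if "0 < t" for t
    using w_deriv[OF that] real_differentiable_def by blast
  show "deriv w differentiable at t" if "0 < t" for t
    using dw_deriv[OF that] real_differentiable_def by blast
  show "continuous_on {0<..} (deriv (deriv w))"
    using W2_cont by (rule continuous_on_cong[THEN iffD1, rotated 2]) (auto simp: deriv2_w)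
  show "wb t \<le> w t" if "0 \<le> t" for t using w_ge that by simp
  show "\<exists>t0>0. strict_antimono_on {0<..<t0} (\<lambda>t. w t / t powr \<iota>) \<and>
        (\<forall>t. 0 < t \<and> t < t0 \<longrightarrow> - w t - 3 * t * deriv w t \<le> t\<^sup>2 * deriv (deriv w) t)"
    using t0 ratio ode by blast
qed

end

lemma Phi_max: "phk \<Phi> c q \<Longrightarrow> 0 \<le> x \<Longrightarrow> 0 \<le> y \<Longrightarrow> \<Phi> (max x y) \<le> \<Phi> x + \<Phi> y"
  using phk.Pnn[of \<Phi> c q x] phk.Pnn[of \<Phi> c q y] by (cases "x \<le> y") (auto simp: max_def)

lemma (in con) w_phi:
  assumes P: "phk \<Phi> cc q"
    and h1: "set_integrable lborel {0<..1} (\<lambda>t. \<Phi> (wb t) / t)"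
    and h2: "set_integrable lborel {0<..1} (\<lambda>t. \<Phi> t / t)"
  shows "set_integrable lborel {0<..1} (\<lambda>t. \<Phi> (w t) / t)"
proof -
  interpret P: phk \<Phi> cc q by (rule P)
  have meas: "set_borel_measurable lborel {0<..1} (\<lambda>t. \<Phi> (h t) / t)"
    if "continuous_on {0..} h" "\<And>t. 0 \<le> t \<Longrightarrow> 0 \<le> h t" for h
  proof -
    have c1: "continuous_on {0<..1} (\<lambda>t. \<Phi> (h t))"
    proof (rule continuous_on_compose2[OF P.Pcont continuous_on_subset[OF that(1)]])
      show "{0<..1} \<subseteq> {0::real..}" by auto
      show "h ` {0<..1} \<subseteq> {0..}"
      proof (rule image_subsetI)
        fix x :: real assume "x \<in> {0<..1}"
        then show "h x \<in> {0..}" using that(2)[of x] by simp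
      qed
    qed
    have "continuous_on {0<..1} (\<lambda>t. \<Phi> (h t) / t)"
      by (rule continuous_on_divide[OF c1 continuous_on_id]) auto
    then show ?thesis unfolding set_borel_measurable_def measurable_lborel2
      by (intro borel_measurable_continuous_on_indicator) auto
  qed
  have ff: "set_integrable lborel {0<..1} (\<lambda>t. \<Phi> (f t) / t)"
  proof (rule set_integrable_bound[OF _ meas])
    show "set_integrable lborel {0<..1} (\<lambda>t. 2 * (\<Phi> (wb t) / t) + 2 * (\<Phi> t / t))"
      by (rule set_integral_add(1)[OF set_integrable_mult_right[OF h1] set_integrable_mult_right[OF h2]])
    show "continuous_on {0..} f" by (rule F.gcont)
    show "0 \<le> f t" if "0 \<le> t" for t using F.gnn that by simp
    show "AE x in lborel. x \<in> {0<..1} \<longrightarrow> norm (\<Phi> (f x) / x) \<le> norm (2 * (\<Phi> (wb x) / x) + 2 * (\<Phi> x / x))"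
    proof (rule AE_I2, rule impI)
      fix x :: real assume x: "x \<in> {0<..1}"
      then have xp: "0 < x" and x1: "x \<le> 1" by auto
      have "f x \<le> 2 * max (wb x) x" using fwb[of x] x by auto
      then have "\<Phi> (f x) \<le> \<Phi> (2 * max (wb x) x)" using F.gnn[of x] xp by (intro P.Pmono) auto
      also have "\<dots> \<le> 2 * \<Phi> (max (wb x) x)" using wbnn[of x] xp by (intro P.Pup) auto
      also have "\<dots> \<le> 2 * (\<Phi> (wb x) + \<Phi> x)" using Phi_max[OF P, of "wb x" x] wbnn[of x] xp by simp
      finally have "\<Phi> (f x) / x \<le> 2 * (\<Phi> (wb x) + \<Phi> x) / x" using xp by (simp add: divide_right_mono)
      moreover have "0 \<le> \<Phi> (f x)" using P.Pnn F.gnn xp by simp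
      moreover have "0 \<le> \<Phi> (wb x)" "0 \<le> \<Phi> x" using P.Pnn wbnn xp by auto
      ultimately show "norm (\<Phi> (f x) / x) \<le> norm (2 * (\<Phi> (wb x) / x) + 2 * (\<Phi> x / x))"
        using xp by (simp add: add_divide_distrib)
    qed
  qed
  have aa: "a \<le> 1" using a1 by simp
  have tt: "set_integrable lborel {0<..1} (\<lambda>t. \<Phi> (T t) / t)"
    by (rule P.phi_tl[OF fgk aa ff])
  show ?thesis
  proof (rule set_integrable_bound[OF _ meas])
    show "set_integrable lborel {0<..1} (\<lambda>t. 3 * (\<Phi> (T t) / t) + 3 * (\<Phi> (f t) / t) + (3 * c) * (\<Phi> t / t))"
      by (rule set_integral_add(1)[OF set_integral_add(1)[OF set_integrable_mult_right[OF tt] set_integrable_mult_right[OF ff]] set_integrable_mult_right[OF h2]])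
    show "continuous_on {0..} w" by (rule w_cont)
    show "0 \<le> w t" if "0 \<le> t" for t using w_nn that by simp
    show "AE x in lborel. x \<in> {0<..1} \<longrightarrow> norm (\<Phi> (w x) / x) \<le>
        norm (3 * (\<Phi> (T x) / x) + 3 * (\<Phi> (f x) / x) + (3 * c) * (\<Phi> x / x))"
    proof (rule AE_I2, rule impI)
      fix x :: real assume x: "x \<in> {0<..1}"
      then have xp: "0 < x" and x1: "x \<le> 1" by auto
      have T0: "0 \<le> T x" using F.tl_nonneg xp by simp
      have f0: "0 \<le> f x" using TV xp by simp
      have "w x = T x + V x + c * x" using xp by (simp add: ww_def W0_def)
      also have "\<dots> \<le> 3 * max (T x) (max (f x) (c * x))" using TV[OF xp] by linarith
      finally have "\<Phi> (w x) \<le> \<Phi> (3 * max (T x) (max (f x) (c * x)))"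
        using w_nn xp by (intro P.Pmono) auto
      also have "\<dots> \<le> 3 * \<Phi> (max (T x) (max (f x) (c * x)))"
        using T0 by (intro P.Pup) auto
      also have "\<dots> \<le> 3 * (\<Phi> (T x) + (\<Phi> (f x) + \<Phi> (c * x)))"
      proof -
        have m0: "0 \<le> max (f x) (c * x)" using f0 by (simp add: le_max_iff_disj)
        have cx: "0 \<le> c * x" using c1 xp by simp
        have "\<Phi> (max (T x) (max (f x) (c * x))) \<le> \<Phi> (T x) + (\<Phi> (f x) + \<Phi> (c * x))"
          using Phi_max[OF P T0 m0] Phi_max[OF P f0 cx] by (meson add_left_mono order_trans)
        then show ?thesis by simp
      qed
      also have "\<Phi> (c * x) \<le> c * \<Phi> x" using c1 xp by (intro P.Pup) auto
      finally have "\<Phi> (w x) \<le> 3 * (\<Phi> (T x) + (\<Phi> (f x) + c * \<Phi> x))" by simp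
      then have "\<Phi> (w x) / x \<le> 3 * (\<Phi> (T x) + (\<Phi> (f x) + c * \<Phi> x)) / x"
        using xp by (simp add: divide_right_mono)
      moreover have "0 \<le> \<Phi> (w x)" using P.Pnn w_nn xp by simp
      moreover have "0 \<le> \<Phi> (T x)" "0 \<le> \<Phi> (f x)" "0 \<le> \<Phi> x" using P.Pnn T0 f0 xp by auto
      ultimately show "norm (\<Phi> (w x) / x) \<le>
          norm (3 * (\<Phi> (T x) / x) + 3 * (\<Phi> (f x) / x) + (3 * c) * (\<Phi> x / x))"
        using xp c1 by (simp add: add_divide_distrib algebra_simps)
    qed
  qed
qed


lemma int_bound:
  fixes g h :: "real \<Rightarrow> real"
  assumes "continuous_on {0<..1} g" "set_integrable lborel {0<..1} h"
    and "\<And>t. 0 < t \<Longrightarrow> t \<le> 1 \<Longrightarrow> \<bar>g t\<bar> \<le> h t"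
  shows "set_integrable lborel {0<..1} g"
proof (rule set_integrable_bound[OF assms(2)])
  show "set_borel_measurable lborel {0<..1} g" unfolding set_borel_measurable_def measurable_lborel2
    by (intro borel_measurable_continuous_on_indicator assms(1)) auto
  show "AE x in lborel. x \<in> {0<..1} \<longrightarrow> norm (g x) \<le> norm (h x)"
  proof (rule AE_I2, rule impI)
    fix x :: real assume "x \<in> {0<..1}"
    then have "\<bar>g x\<bar> \<le> h x" using assms(3) by auto
    then show "norm (g x) \<le> norm (h x)" by simp
  qed
qed

lemma one_int: "set_integrable lborel {0<..1::real} (\<lambda>t. C * t powr (1 - 1))"
  using set_integrable_mult_right[OF powr_integrable[of 1]] by simp

lemma phk_id: "phk (\<lambda>x. x) 1 1"
proof
  show "1 * l powr 1 * x \<le> l * x" if "1 \<le> l" "0 \<le> x" for l x :: real using that by simp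
qed (auto intro: continuous_intros)

lemma phk_pow:
  assumes p: "0 < p" "p \<le> 1"
  shows "phk (\<lambda>x. x powr p) 1 p"
proof
  show "continuous_on {0..} (\<lambda>x::real. x powr p)"
    by (rule continuous_on_powr') (use p in \<open>auto intro: continuous_intros\<close>)
  show "x powr p \<le> y powr p" if "0 \<le> x" "x \<le> y" for x y :: real
    using powr_mono2[of p x y] p that by simp
  show "(l * x) powr p \<le> l * x powr p" if "1 \<le> l" "0 \<le> x" for l x :: real
  proof -
    have "l powr p \<le> l powr 1" using that p by (intro powr_mono) auto
    then have "l powr p * x powr p \<le> l * x powr p" using that by (intro mult_right_mono) auto
    then show ?thesis using that by (simp add: powr_mult)
  qed
  show "1 * l powr p * x powr p \<le> (l * x) powr p" if "1 \<le> l" "0 \<le> x" for l x :: real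
    using that by (simp add: powr_mult)
qed (use p in auto)

definition LL :: "real \<Rightarrow> real \<Rightarrow> real" where "LL M x = max 0 (ln (M / x))"
definition PL :: "real \<Rightarrow> real \<Rightarrow> real" where "PL M x = x * (1 + LL M x)"

lemma LL_shift: "0 < M \<Longrightarrow> 0 < x \<Longrightarrow> x \<le> y \<Longrightarrow> LL M x \<le> LL M y + ln (y / x)"
proof -
  assume M: "0 < M" and x: "0 < x" and xy: "x \<le> y"
  have "ln (M / x) = ln (M / y) + ln (y / x)" using M x xy by (simp add: ln_div)
  moreover have "0 \<le> ln (y / x)" using x xy by simp
  ultimately show ?thesis unfolding LL_def by auto
qed

lemma LL_nn: "0 \<le> LL M x" unfolding LL_def by simp

lemma LL_anti: "0 < M \<Longrightarrow> 0 < x \<Longrightarrow> x \<le> y \<Longrightarrow> LL M y \<le> LL M x"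
  unfolding LL_def using ln_le_cancel_iff by (simp add: max_def frac_le) 

lemma PL_bound: "0 < M \<Longrightarrow> 0 < x \<Longrightarrow> PL M x \<le> x + 2 * (M powr (1/2)) * x powr (1/2)"
proof -
  assume M: "0 < M" and x: "0 < x"
  have "LL M x \<le> 2 * (M / x) powr (1/2)"
  proof (cases "1 \<le> M / x")
    case True
    have "ln (M / x) \<le> (M / x) powr (1/2) / (1/2)" by (rule ln_powr_bound[OF True]) simp
    then show ?thesis unfolding LL_def by simp
  next
    case False
    then have "ln (M / x) \<le> 0" using M x by simp
    then show ?thesis unfolding LL_def by simp
  qed
  then have "x * LL M x \<le> x * (2 * (M / x) powr (1/2))" using x by (intro mult_left_mono) auto
  also have "x * (2 * (M / x) powr (1/2)) = 2 * (M powr (1/2)) * x powr (1/2)"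
  proof -
    have "x * (M / x) powr (1/2) = x powr (1/2) * x powr (1/2) * (M powr (1/2) / x powr (1/2))"
      using x M by (simp add: powr_divide powr_add[symmetric])
    then show ?thesis using x by simp
  qed
  finally show ?thesis unfolding PL_def by (simp add: algebra_simps)
qed

lemma phk_log:
  assumes M: "0 < M"
  shows "phk (PL M) (1/2) (1/2)"
proof
  show "continuous_on {0..} (PL M)"
  proof (rule continuous_on_eq_continuous_within[THEN iffD2], rule ballI)
    fix x :: real assume x: "x \<in> {0..}"
    show "continuous (at x within {0..}) (PL M)"
    proof (cases "x = 0")
      case False
      then have "0 < x" using x by simp
      then have "isCont (PL M) x" unfolding PL_def[abs_def] LL_def
        using M by (auto intro!: continuous_intros)
      then show ?thesis by (rule continuous_at_imp_continuous_within)
    next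
      case True
      have "(PL M \<longlongrightarrow> 0) (at_right 0)"
      proof (rule tendsto_sandwich[of "\<lambda>_. 0" _ _ "\<lambda>x. x + 2 * (M powr (1/2)) * x powr (1/2)"])
        show "\<forall>\<^sub>F x in at_right 0. 0 \<le> PL M x"
          by (rule eventually_mono[OF eventually_at_right_less]) (simp add: PL_def LL_nn add_nonneg_nonneg)
        show "\<forall>\<^sub>F x in at_right 0. PL M x \<le> x + 2 * M powr (1 / 2) * x powr (1 / 2)"
          by (rule eventually_mono[OF eventually_at_right_less]) (use PL_bound M in auto)
        have "((\<lambda>x. x + 2 * M powr (1 / 2) * x powr (1 / 2)) \<longlongrightarrow> 0 + 2 * M powr (1/2) * 0 powr (1/2)) (at_right 0)"
          by (intro tendsto_intros) (auto intro: eventually_mono[OF eventually_at_right_less])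
        then show "((\<lambda>x. x + 2 * M powr (1 / 2) * x powr (1 / 2)) \<longlongrightarrow> 0) (at_right 0)" by simp
      qed simp
      then show ?thesis using True by (simp add: continuous_within at_within_Ici_at_right PL_def)
    qed
  qed
  show "PL M x \<le> PL M y" if "0 \<le> x" "x \<le> y" for x y
  proof (cases "x = 0")
    case True then show ?thesis using that by (simp add: PL_def LL_nn)
  next
    case False
    then have xp: "0 < x" using that by simp
    have "x * LL M x \<le> x * (LL M y + ln (y / x))" using LL_shift[OF M xp that(2)] xp by (intro mult_left_mono) auto
    also have "x * ln (y / x) \<le> x * (y / x - 1)" using xp that by (intro mult_left_mono ln_le_minus_one) auto
    then have "x * (LL M y + ln (y / x)) \<le> x * LL M y + (y - x)" using xp by (simp add: algebra_simps)
    also have "x * LL M y \<le> y * LL M y" using that LL_nn by (intro mult_right_mono) auto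
    finally have "x * LL M x \<le> y * LL M y + (y - x)" by simp
    then show ?thesis unfolding PL_def by (simp add: algebra_simps)
  qed
  show "PL M 0 = 0" by (simp add: PL_def)
  show "PL M (l * x) \<le> l * PL M x" if "1 \<le> l" "0 \<le> x" for l x
  proof (cases "x = 0")
    case True then show ?thesis by (simp add: PL_def)
  next
    case False
    then have xp: "0 < x" using that by simp
    have "LL M (l * x) \<le> LL M x" using LL_anti[OF M xp, of "l * x"] that xp by simp
    then have "l * x * (1 + LL M (l * x)) \<le> l * x * (1 + LL M x)"
      using that xp by (intro mult_left_mono) auto
    then show ?thesis unfolding PL_def by (simp add: mult.assoc)
  qed
  show "1 / 2 * l powr (1 / 2) * PL M x \<le> PL M (l * x)" if l: "1 \<le> l" and x0: "0 \<le> x" for l x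
  proof (cases "x = 0")
    case True then show ?thesis by (simp add: PL_def)
  next
    case False
    then have xp: "0 < x" using x0 by simp
    define s where "s = l powr (1/2)"
    have s1: "1 \<le> s" unfolding s_def using l by (simp add: ge_one_powr_ge_zero)
    have ss: "s * s = l" unfolding s_def using l by (simp add: powr_add[symmetric])
    have lnl: "ln l = 2 * ln s" unfolding s_def using l by simp
    have "ln s \<le> s - 1" using s1 by (intro ln_le_minus_one) auto
    then have hl: "1 + ln l \<le> 2 * s" using lnl by simp
    have lnl0: "0 \<le> ln l" using l by simp
    have sh: "LL M x \<le> LL M (l * x) + ln l"
      using LL_shift[OF M xp, of "l * x"] l xp by simp
    have "1 + LL M x \<le> (1 + LL M (l * x)) * (1 + ln l)"
    proof -
      have "0 \<le> LL M (l * x) * ln l" using LL_nn lnl0 by simp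
      then show ?thesis using sh by (simp add: algebra_simps)
    qed
    also have "\<dots> \<le> (1 + LL M (l * x)) * (2 * s)"
      using hl LL_nn by (intro mult_left_mono) (auto intro: add_nonneg_nonneg)
    finally have h: "1 + LL M x \<le> (1 + LL M (l * x)) * (2 * s)" .
    have "1 / 2 * l powr (1 / 2) * PL M x = s / 2 * x * (1 + LL M x)"
      unfolding PL_def s_def by simp
    also have "\<dots> \<le> s / 2 * x * ((1 + LL M (l * x)) * (2 * s))"
      using h s1 xp by (intro mult_left_mono) auto
    also have "\<dots> = (s * s) * x * (1 + LL M (l * x))" by (simp add: algebra_simps)
    also have "\<dots> = PL M (l * x)" unfolding ss PL_def by simp
    finally show ?thesis .
  qed
qed auto


lemma adm_facts:
  assumes "admissible_modulus wb"
  shows "continuous_on {0..} wb" "\<And>x y. 0 \<le> x \<Longrightarrow> x \<le> y \<Longrightarrow> wb x \<le> wb y"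
    "wb 0 = 0" "\<And>x. 0 \<le> x \<Longrightarrow> 0 \<le> wb x"
  using assms unfolding admissible_modulus_def mono_on_def by auto

lemma region_int:
  assumes adm: "admissible_modulus wb" and w1: "0 < wb 1" and k: "0 < \<kappa>" "\<kappa> < 1"
    and hyp: "set_integrable lborel {0<..1} hyp" and hypnn: "\<And>t. 0 < t \<Longrightarrow> t \<le> 1 \<Longrightarrow> 0 \<le> hyp t"
    and tc: "continuous_on {0<..1} tgt" and tnn: "\<And>t. 0 < t \<Longrightarrow> t \<le> 1 \<Longrightarrow> 0 \<le> tgt t"
    and small: "\<And>t. 0 < t \<Longrightarrow> t \<le> 1 \<Longrightarrow> wb t \<le> \<kappa> * wb 1 \<Longrightarrow> tgt t \<le> C * hyp t"
    and big: "\<And>t. 0 < t \<Longrightarrow> t \<le> 1 \<Longrightarrow> tgt t \<le> D / t"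
  shows "set_integrable lborel {0<..1} tgt"
proof -
  note A = adm_facts[OF adm]
  have "(wb \<longlongrightarrow> wb 0) (at 0 within {0..})" using A(1) by (simp add: continuous_on_def)
  then have "\<forall>\<^sub>F x in at 0 within {0..}. wb x < \<kappa> * wb 1"
    using A(3) k w1 by (intro order_tendstoD) auto
  then obtain d where d: "0 < d" "\<And>x. x \<in> {0..} \<Longrightarrow> x \<noteq> 0 \<Longrightarrow> dist x 0 < d \<Longrightarrow> wb x < \<kappa> * wb 1"
    unfolding eventually_at by auto
  define \<tau> where "\<tau> = min d 1"
  have tau: "0 < \<tau>" using d by (simp add: \<tau>_def)
  show ?thesis
  proof (rule int_bound[OF tc])
    show "set_integrable lborel {0<..1} (\<lambda>t. \<bar>C\<bar> * hyp t + (\<bar>D\<bar> / \<tau>) * t powr (1 - 1))"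
      by (rule set_integral_add(1)[OF set_integrable_mult_right[OF hyp] one_int])
    fix t :: real assume t: "0 < t" "t \<le> 1"
    have hC: "C * hyp t \<le> \<bar>C\<bar> * hyp t" using hypnn[OF t] by (intro mult_right_mono) auto
    have hnn: "0 \<le> \<bar>C\<bar> * hyp t" using hypnn[OF t] by simp
    show "\<bar>tgt t\<bar> \<le> \<bar>C\<bar> * hyp t + (\<bar>D\<bar> / \<tau>) * t powr (1 - 1)"
    proof (cases "wb t \<le> \<kappa> * wb 1")
      case True
      have "tgt t \<le> C * hyp t" using small[OF t True] .
      then have "tgt t \<le> \<bar>C\<bar> * hyp t" using hC by linarith
      moreover have "0 \<le> \<bar>D\<bar> / \<tau> * t powr (1 - 1)" using tau by simp
      ultimately show ?thesis using tnn[OF t] by simp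
    next
      case False
      have "\<not> t < d"
      proof
        assume "t < d"
        then have "wb t < \<kappa> * wb 1" using d(2)[of t] t by (simp add: dist_real_def)
        with False show False by simp
      qed
      then have "d \<le> t" by simp
      then have tt: "\<tau> \<le> t" by (simp add: \<tau>_def)
      have "tgt t \<le> D / t" by (rule big[OF t])
      also have "\<dots> \<le> \<bar>D\<bar> / t" using t by (simp add: divide_right_mono)
      also have "\<dots> \<le> \<bar>D\<bar> / \<tau>" using tt tau by (intro divide_left_mono) auto
      finally show ?thesis using tnn[OF t] hnn t by simp
    qed
  qed
qed

lemma zero_case:
  fixes tgt :: "real \<Rightarrow> real"
  assumes adm: "admissible_modulus wb" and w1: "wb 1 = 0"
    and tc: "continuous_on {0<..1} tgt" and tz: "\<And>t. 0 < t \<Longrightarrow> t \<le> 1 \<Longrightarrow> wb t = 0 \<Longrightarrow> tgt t = 0"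
  shows "set_integrable lborel {0<..1} tgt"
proof (rule int_bound[OF tc one_int[of 0]])
  note A = adm_facts[OF adm]
  fix t :: real assume t: "0 < t" "t \<le> 1"
  have "wb t = 0" using A(2)[of t 1] A(4)[of t] t w1 by simp
  then show "\<bar>tgt t\<bar> \<le> 0 * t powr (1 - 1)" using tz[OF t] by simp
qed

lemma wb_cont_pos: "admissible_modulus wb \<Longrightarrow> continuous_on {0<..1} wb"
  by (rule continuous_on_subset[OF adm_facts(1)]) auto

lemma conv_A:
  assumes adm: "admissible_modulus wb" and s: "0 < s" "s < 1/2" and h: "two_s_dini s wb"
  shows "set_integrable lborel {0<..1} (\<lambda>t. wb t powr (2 * s) / t)"
proof -
  note A = adm_facts[OF adm]
  define e where "e = 2 * s - 1"
  have e0: "e < 0" unfolding e_def using s by simp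
  define hyp where "hyp t = wb t / t * ((wb t powr e - wb 1 powr e) / (1 - 2 * s))" for t
  have hint: "set_integrable lborel {0<..1} hyp"
    using h s unfolding two_s_dini_def hyp_def e_def by simp
  have tc: "continuous_on {0<..1} (\<lambda>t. wb t powr (2 * s) / t)"
  proof -
    have c1: "continuous_on {0<..1} (\<lambda>t. wb t powr (2 * s))"
      by (rule continuous_on_powr'[OF wb_cont_pos[OF adm] continuous_on_const]) (use s A(4) in auto)
    show ?thesis by (rule continuous_on_divide[OF c1 continuous_on_id]) auto
  qed
  show ?thesis
  proof (cases "wb 1 = 0")
    case True then show ?thesis using s by (intro zero_case[OF adm True tc]) auto
  next
    case False
    then have w1: "0 < wb 1" using A(4)[of 1] by simp
    define \<kappa> where "\<kappa> = 2 powr (1 / e)"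
    have k: "0 < \<kappa>" "\<kappa> < 1"
    proof -
      have "1 / e < 0" using e0 by simp
      then have "2 powr (1 / e) < 2 powr 0" by (subst powr_less_cancel_iff) auto
      then show "0 < \<kappa>" "\<kappa> < 1" unfolding \<kappa>_def by auto
    qed
    have ke: "\<kappa> powr e = 2" unfolding \<kappa>_def using e0 by (simp add: powr_powr)
    have wle: "wb t \<le> wb 1" if "0 < t" "t \<le> 1" for t using A(2)[of t 1] that by simp
    have hypnn: "0 \<le> hyp t" if t: "0 < t" "t \<le> 1" for t
    proof (cases "wb t = 0")
      case True then show ?thesis by (simp add: hyp_def)
    next
      case False
      then have wp: "0 < wb t" using A(4)[of t] t by simp
      have "wb 1 powr e \<le> wb t powr e" using powr_mono2'[OF less_imp_le[OF e0] wp wle[OF t]] .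
      then show ?thesis unfolding hyp_def using wp t s by (intro mult_nonneg_nonneg divide_nonneg_pos) auto
    qed
    show ?thesis
    proof (rule region_int[OF adm w1 k hint hypnn tc])
      show "0 \<le> wb t powr (2 * s) / t" if "0 < t" "t \<le> 1" for t using that by simp
      show "wb t powr (2 * s) / t \<le> wb 1 powr (2 * s) / t" if t: "0 < t" "t \<le> 1" for t
        using wle[OF t] A(4)[of t] t s by (intro divide_right_mono powr_mono2) auto
      show "wb t powr (2 * s) / t \<le> (2 * (1 - 2 * s)) * hyp t"
        if t: "0 < t" "t \<le> 1" and sm: "wb t \<le> \<kappa> * wb 1" for t
      proof (cases "wb t = 0")
        case True then show ?thesis by (simp add: hyp_def)
      next
        case False
        then have wp: "0 < wb t" using A(4)[of t] t by simp
        have "(\<kappa> * wb 1) powr e \<le> wb t powr e" using powr_mono2'[OF less_imp_le[OF e0] wp sm] .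
        then have "2 * wb 1 powr e \<le> wb t powr e" using ke k w1 by (simp add: powr_mult)
        then have q: "wb t powr e / 2 \<le> wb t powr e - wb 1 powr e" by simp
        have sp: "wb t powr (2 * s) = wb t * wb t powr e"
        proof -
          have "wb t powr (2 * s) = wb t powr (1 + e)" unfolding e_def by simp
          also have "\<dots> = wb t powr 1 * wb t powr e" by (simp only: powr_add)
          finally show ?thesis using wp by simp
        qed
        have "wb t powr (2 * s) / t = 2 * (1 - 2 * s) * (wb t / t * ((wb t powr e / 2) / (1 - 2 * s)))"
          unfolding sp using s t by (simp add: field_simps)
        also have "\<dots> \<le> 2 * (1 - 2 * s) * (wb t / t * ((wb t powr e - wb 1 powr e) / (1 - 2 * s)))"
          using q wp t s by (intro mult_left_mono divide_right_mono) auto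
        finally show ?thesis unfolding hyp_def .
      qed
    qed
  qed
qed


lemma wbt_cont: "admissible_modulus wb \<Longrightarrow> continuous_on {0<..1} (\<lambda>t. wb t / t)"
  by (rule continuous_on_divide[OF wb_cont_pos continuous_on_id]) auto

lemma conv_B:
  assumes adm: "admissible_modulus wb" and s: "1/2 < s" "s < 1" and h: "two_s_dini s wb"
  shows "dini wb"
proof -
  note A = adm_facts[OF adm]
  define e where "e = 2 * s - 1"
  have e0: "0 < e" unfolding e_def using s by simp
  define hyp where "hyp t = wb t / t * ((wb t powr e - wb 1 powr e) / (1 - 2 * s))" for t
  have hint: "set_integrable lborel {0<..1} hyp"
    using h s unfolding two_s_dini_def hyp_def e_def by simp
  have tc: "continuous_on {0<..1} (\<lambda>t. wb t / t)" by (rule wbt_cont[OF adm])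
  show ?thesis unfolding dini_def
  proof (cases "wb 1 = 0")
    case True then show "set_integrable lborel {0<..1} (\<lambda>t. wb t / t)"
      by (intro zero_case[OF adm True tc]) auto
  next
    case False
    then have w1: "0 < wb 1" using A(4)[of 1] by simp
    define \<kappa> where "\<kappa> = 2 powr (- 1 / e)"
    have k: "0 < \<kappa>" "\<kappa> < 1"
    proof -
      have "- 1 / e < 0" using e0 by simp
      then have "2 powr (- 1 / e) < 2 powr 0" by (subst powr_less_cancel_iff) auto
      then show "0 < \<kappa>" "\<kappa> < 1" unfolding \<kappa>_def by auto
    qed
    have ke: "\<kappa> powr e = 1 / 2"
    proof -
      have "\<kappa> powr e = 2 powr (- 1 / e * e)" unfolding \<kappa>_def by (simp only: powr_powr)
      also have "- 1 / e * e = -1" using e0 by simp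
      finally show ?thesis by (simp add: powr_minus_divide)
    qed
    have wle: "wb t \<le> wb 1" if "0 < t" "t \<le> 1" for t using A(2)[of t 1] that by simp
    have hyp_eq: "hyp t = wb t / t * ((wb 1 powr e - wb t powr e) / e)" for t
    proof -
      have n: "1 - 2 * s = - e" unfolding e_def by simp
      show ?thesis unfolding hyp_def n by (metis minus_diff_eq minus_divide_left minus_divide_right)
    qed
    have hypnn: "0 \<le> hyp t" if t: "0 < t" "t \<le> 1" for t
    proof -
      have "wb t powr e \<le> wb 1 powr e" using powr_mono2[of e "wb t" "wb 1"] e0 A(4)[of t] wle[OF t] t by simp
      then show ?thesis unfolding hyp_eq using e0 t A(4)[of t] by (intro mult_nonneg_nonneg divide_nonneg_pos) auto
    qed
    show "set_integrable lborel {0<..1} (\<lambda>t. wb t / t)"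
    proof (rule region_int[OF adm w1 k hint hypnn tc])
      show "0 \<le> wb t / t" if "0 < t" "t \<le> 1" for t using that A(4)[of t] by simp
      show "wb t / t \<le> wb 1 / t" if t: "0 < t" "t \<le> 1" for t
        using wle[OF t] t by (simp add: divide_right_mono)
      show "wb t / t \<le> (2 * e / wb 1 powr e) * hyp t"
        if t: "0 < t" "t \<le> 1" and sm: "wb t \<le> \<kappa> * wb 1" for t
      proof -
        have "wb t powr e \<le> (\<kappa> * wb 1) powr e" using powr_mono2[of e "wb t" "\<kappa> * wb 1"] e0 A(4)[of t] sm t by simp
        also have "\<dots> = wb 1 powr e / 2" using ke k w1 by (simp add: powr_mult)
        finally have q: "wb 1 powr e / 2 \<le> wb 1 powr e - wb t powr e" by simp
        have wp: "0 \<le> wb t / t" using A(4)[of t] t by simp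
        have pw: "0 < wb 1 powr e" using w1 by simp
        have "wb t / t * ((wb 1 powr e / 2) / e) \<le> hyp t"
          unfolding hyp_eq using q wp e0 by (intro mult_left_mono divide_right_mono) auto
        moreover have "wb t / t = (2 * e / wb 1 powr e) * (wb t / t * ((wb 1 powr e / 2) / e))"
          using pw e0 by (simp add: field_simps)
        ultimately show ?thesis using pw e0 by (metis mult_left_mono divide_nonneg_nonneg less_imp_le mult_nonneg_nonneg zero_le_numeral)
      qed
    qed
  qed
qed

lemma conv_C1:
  assumes adm: "admissible_modulus wb" and h: "two_s_dini (1/2) wb"
  shows "dini wb"
proof -
  note A = adm_facts[OF adm]
  define hyp where "hyp t = wb t / t * ln (wb 1 / wb t)" for t
  have hint: "set_integrable lborel {0<..1} hyp"
    using h unfolding two_s_dini_def hyp_def by simp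
  have tc: "continuous_on {0<..1} (\<lambda>t. wb t / t)" by (rule wbt_cont[OF adm])
  show ?thesis unfolding dini_def
  proof (cases "wb 1 = 0")
    case True then show "set_integrable lborel {0<..1} (\<lambda>t. wb t / t)"
      by (intro zero_case[OF adm True tc]) auto
  next
    case False
    then have w1: "0 < wb 1" using A(4)[of 1] by simp
    have k: "0 < exp (-1::real)" "exp (-1::real) < 1" by auto
    have wle: "wb t \<le> wb 1" if "0 < t" "t \<le> 1" for t using A(2)[of t 1] that by simp
    have hypnn: "0 \<le> hyp t" if t: "0 < t" "t \<le> 1" for t
    proof (cases "wb t = 0")
      case True then show ?thesis by (simp add: hyp_def)
    next
      case False
      then have wp: "0 < wb t" using A(4)[of t] t by simp
      have "1 \<le> wb 1 / wb t" using wle[OF t] wp by simp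
      then show ?thesis unfolding hyp_def using wp t by simp
    qed
    show "set_integrable lborel {0<..1} (\<lambda>t. wb t / t)"
    proof (rule region_int[OF adm w1 k hint hypnn tc])
      show "0 \<le> wb t / t" if "0 < t" "t \<le> 1" for t using that A(4)[of t] by simp
      show "wb t / t \<le> wb 1 / t" if t: "0 < t" "t \<le> 1" for t
        using wle[OF t] t by (simp add: divide_right_mono)
      show "wb t / t \<le> 1 * hyp t"
        if t: "0 < t" "t \<le> 1" and sm: "wb t \<le> exp (-1) * wb 1" for t
      proof (cases "wb t = 0")
        case True then show ?thesis by (simp add: hyp_def)
      next
        case False
        then have wp: "0 < wb t" using A(4)[of t] t by simp
        have "wb t * exp 1 \<le> wb 1" using sm by (simp add: exp_minus field_simps)
        then have "exp 1 \<le> wb 1 / wb t" using wp by (simp add: field_simps)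
        then have "ln (exp 1) \<le> ln (wb 1 / wb t)" by (subst ln_le_cancel_iff) (use w1 wp in auto)
        then have "1 \<le> ln (wb 1 / wb t)" by simp
        then have "wb t / t * 1 \<le> wb t / t * ln (wb 1 / wb t)" using wp t by (intro mult_left_mono) auto
        then show ?thesis unfolding hyp_def by simp
      qed
    qed
  qed
qed

lemma conv_C2:
  assumes adm: "admissible_modulus wb" and h: "two_s_dini (1/2) wb" and M: "0 < M"
  shows "set_integrable lborel {0<..1} (\<lambda>t. PL M (wb t) / t)"
proof -
  note A = adm_facts[OF adm]
  interpret P: phk "PL M" "1/2" "1/2" by (rule phk_log[OF M])
  have tc: "continuous_on {0<..1} (\<lambda>t. PL M (wb t) / t)"
  proof -
    have c1: "continuous_on {0<..1} (\<lambda>t. PL M (wb t))"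
    proof (rule continuous_on_compose2[OF P.Pcont wb_cont_pos[OF adm]])
      show "wb ` {0<..1} \<subseteq> {0..}"
      proof (rule image_subsetI)
        fix x :: real assume "x \<in> {0<..1}"
        then show "wb x \<in> {0..}" using A(4)[of x] by simp
      qed
    qed
    show ?thesis by (rule continuous_on_divide[OF c1 continuous_on_id]) auto
  qed
  show ?thesis
  proof (cases "wb 1 = 0")
    case True then show ?thesis by (intro zero_case[OF adm True tc]) (auto simp: PL_def)
  next
    case False
    then have w1: "0 < wb 1" using A(4)[of 1] by simp
    define K where "K = 1 + \<bar>ln (M / wb 1)\<bar>"
    have d: "set_integrable lborel {0<..1} (\<lambda>t. wb t / t)" using conv_C1[OF adm h] unfolding dini_def .
    have hint: "set_integrable lborel {0<..1} (\<lambda>t. wb t / t * ln (wb 1 / wb t))"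
      using h unfolding two_s_dini_def by simp
    show ?thesis
    proof (rule int_bound[OF tc set_integral_add(1)[OF set_integrable_mult_right[OF d, of K] hint]])
      fix t :: real assume t: "0 < t" "t \<le> 1"
      have wle: "wb t \<le> wb 1" using A(2)[of t 1] t by simp
      show "\<bar>PL M (wb t) / t\<bar> \<le> K * (wb t / t) + wb t / t * ln (wb 1 / wb t)"
      proof (cases "wb t = 0")
        case True then show ?thesis by (simp add: PL_def)
      next
        case False
        then have wp: "0 < wb t" using A(4)[of t] t by simp
        have l0: "0 \<le> ln (wb 1 / wb t)" using wle wp by simp
        have "ln (M / wb t) = ln (M / wb 1) + ln (wb 1 / wb t)" using M wp w1 by (simp add: ln_div)
        then have "LL M (wb t) \<le> \<bar>ln (M / wb 1)\<bar> + ln (wb 1 / wb t)"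
          unfolding LL_def using l0 by auto
        then have "PL M (wb t) \<le> wb t * (K + ln (wb 1 / wb t))"
          unfolding PL_def K_def using wp by (intro mult_left_mono) auto
        then have "PL M (wb t) / t \<le> wb t * (K + ln (wb 1 / wb t)) / t"
          using t by (simp add: divide_right_mono)
        also have "\<dots> = K * (wb t / t) + wb t / t * ln (wb 1 / wb t)" by (simp add: algebra_simps add_divide_distrib)
        finally show ?thesis using P.Pnn[of "wb t"] wp t by simp
      qed
    qed
  qed
qed


lemma get_c:
  assumes adm: "admissible_modulus wb"
  obtains c where "1 \<le> c" "\<And>t. 1 \<le> t \<Longrightarrow> wb t \<le> c * t"
proof -
  note A = adm_facts[OF adm]
  have "Limsup at_top (\<lambda>t. ereal (wb t / t)) < \<infinity>" using adm unfolding admissible_modulus_def by simp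
  then obtain n :: nat where n: "Limsup at_top (\<lambda>t. ereal (wb t / t)) < ereal (real n)"
    using less_PInf_Ex_of_nat by (metis less_irrefl)
  have "\<forall>\<^sub>F t in at_top. ereal (wb t / t) < ereal (real n)" by (rule Limsup_lessD[OF n])
  then obtain N where N: "\<And>t. N \<le> t \<Longrightarrow> wb t / t < real n"
    unfolding eventually_at_top_linorder by auto
  define N1 where "N1 = max N 1"
  define c where "c = 1 + real n + wb N1"
  have wN: "0 \<le> wb N1" using A(4)[of N1] by (simp add: N1_def)
  show ?thesis
  proof (rule that[of c])
    show "1 \<le> c" using wN by (simp add: c_def)
    fix t :: real assume t: "1 \<le> t"
    show "wb t \<le> c * t"
    proof (cases "N1 \<le> t")
      case True
      then have "wb t / t < real n" using N[of t] by (simp add: N1_def)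
      then have "wb t < real n * t" using t by (simp add: pos_divide_less_eq)
      also have "\<dots> \<le> c * t" using t wN by (intro mult_right_mono) (auto simp: c_def)
      finally show ?thesis by simp
    next
      case False
      then have "wb t \<le> wb N1" using A(2)[of t N1] t by simp
      also have "\<dots> \<le> c" by (simp add: c_def)
      also have "\<dots> \<le> c * t" using t wN by (simp add: c_def)
      finally show ?thesis .
    qed
  qed
qed

lemma tt_int: "set_integrable lborel {0<..1::real} (\<lambda>t. t / t)"
proof (rule int_bound[OF _ one_int[of 1]])
  show "continuous_on {0<..1::real} (\<lambda>t. t / t)"
    by (rule continuous_on_divide[OF continuous_on_id continuous_on_id]) auto
qed simp

context con begin

lemma w_pos: "0 < t \<Longrightarrow> 0 < w t"
  using w_smono unfolding monotone_on_def by (metis atLeast_iff order_refl ww_def less_imp_le)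

lemma w_le1: "0 < t \<Longrightarrow> t \<le> 1 \<Longrightarrow> w t \<le> w 1"
  using w_smono unfolding monotone_on_def by (metis atLeast_iff less_eq_real_def order.trans zero_le_one less_imp_le)

lemma wnn: "0 < t \<Longrightarrow> 0 \<le> w t" and wne: "0 < t \<Longrightarrow> w t \<noteq> 0"
  using w_pos[of t] by auto

lemma w_cont_pos: "continuous_on {0<..1} w"
  by (rule continuous_on_subset[OF w_cont]) auto

lemma res_dini: "dini wb \<Longrightarrow> dini w"
  unfolding dini_def using w_phi[OF phk_id _ tt_int] by simp

lemma res_lt:
  assumes s: "0 < s" "s < 1/2" and h: "two_s_dini s wb"
  shows "two_s_dini s w"
proof -
  have p: "0 < 2 * s" "2 * s \<le> 1" using s by auto
  have h2: "set_integrable lborel {0<..1} (\<lambda>t. t powr (2 * s) / t)"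
  proof (rule int_bound[OF _ powr_integrable[OF p(1)]])
    show "continuous_on {0<..1} (\<lambda>t::real. t powr (2 * s) / t)"
      by (rule continuous_on_divide[OF continuous_on_powr'[OF continuous_on_id continuous_on_const] continuous_on_id])
         (use s in auto)
    fix t :: real assume t: "0 < t" "t \<le> 1"
    show "\<bar>t powr (2 * s) / t\<bar> \<le> t powr (2 * s - 1)" using t by (simp add: powr_diff)
  qed
  have W: "set_integrable lborel {0<..1} (\<lambda>t. w t powr (2 * s) / t)"
    using w_phi[OF phk_pow[OF p] conv_A[OF adm s h] h2] by simp
  define e where "e = 2 * s - 1"
  have e0: "e < 0" using s by (simp add: e_def)
  have "set_integrable lborel {0<..1} (\<lambda>t. w t / t * ((w t powr e - w 1 powr e) / (1 - 2 * s)))"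
  proof (rule int_bound[OF _ set_integrable_mult_right[OF W, of "1 / (1 - 2 * s)"]])
    show "continuous_on {0<..1} (\<lambda>t. w t / t * ((w t powr e - w 1 powr e) / (1 - 2 * s)))"
    proof -
      have c1: "continuous_on {0<..1} (\<lambda>t. w t powr e)"
        by (rule continuous_on_powr'[OF w_cont_pos continuous_on_const]) (use wnn wne in auto)
      have c2: "continuous_on {0<..1} (\<lambda>t. w t / t)"
        by (rule continuous_on_divide[OF w_cont_pos continuous_on_id]) auto
      show ?thesis
        by (rule continuous_on_mult[OF c2 continuous_on_divide[OF continuous_on_diff[OF c1 continuous_on_const] continuous_on_const]])
           (use s in auto)
    qed
    fix t :: real assume t: "0 < t" "t \<le> 1"
    have wp: "0 < w t" using w_pos t by simp
    have "w 1 powr e \<le> w t powr e" using powr_mono2'[OF less_imp_le[OF e0] wp w_le1[OF t]] .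
    then have nn: "0 \<le> w t / t * ((w t powr e - w 1 powr e) / (1 - 2 * s))"
      using wp t s by (intro mult_nonneg_nonneg divide_nonneg_pos) auto
    have sp: "w t powr (2 * s) = w t * w t powr e"
    proof -
      have "w t powr (2 * s) = w t powr (1 + e)" unfolding e_def by simp
      also have "\<dots> = w t powr 1 * w t powr e" by (simp only: powr_add)
      finally show ?thesis using wp by simp
    qed
    have "w t / t * ((w t powr e - w 1 powr e) / (1 - 2 * s)) \<le> w t / t * ((w t powr e) / (1 - 2 * s))"
      using wp t s by (intro mult_left_mono divide_right_mono) auto
    also have "\<dots> = 1 / (1 - 2 * s) * (w t powr (2 * s) / t)" unfolding sp using s t by (simp add: field_simps)
    finally have le: "w t / t * ((w t powr e - w 1 powr e) / (1 - 2 * s)) \<le> 1 / (1 - 2 * s) * (w t powr (2 * s) / t)" .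
    show "\<bar>w t / t * ((w t powr e - w 1 powr e) / (1 - 2 * s))\<bar> \<le> 1 / (1 - 2 * s) * (w t powr (2 * s) / t)"
      unfolding abs_of_nonneg[OF nn] by (rule le)
  qed
  then show ?thesis using s unfolding two_s_dini_def e_def by simp
qed

lemma res_gt:
  assumes s: "1/2 < s" "s < 1" and h: "two_s_dini s wb"
  shows "two_s_dini s w"
proof -
  have W: "set_integrable lborel {0<..1} (\<lambda>t. w t / t)"
    using res_dini[OF conv_B[OF adm s h]] unfolding dini_def .
  define e where "e = 2 * s - 1"
  have e0: "0 < e" using s by (simp add: e_def)
  have "set_integrable lborel {0<..1} (\<lambda>t. w t / t * ((w t powr e - w 1 powr e) / (1 - 2 * s)))"
  proof (rule int_bound[OF _ set_integrable_mult_right[OF W, of "w 1 powr e / e"]])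
    show "continuous_on {0<..1} (\<lambda>t. w t / t * ((w t powr e - w 1 powr e) / (1 - 2 * s)))"
    proof -
      have c1: "continuous_on {0<..1} (\<lambda>t. w t powr e)"
        by (rule continuous_on_powr'[OF w_cont_pos continuous_on_const]) (use wnn wne in auto)
      have c2: "continuous_on {0<..1} (\<lambda>t. w t / t)"
        by (rule continuous_on_divide[OF w_cont_pos continuous_on_id]) auto
      show ?thesis
        by (rule continuous_on_mult[OF c2 continuous_on_divide[OF continuous_on_diff[OF c1 continuous_on_const] continuous_on_const]])
           (use s in auto)
    qed
    fix t :: real assume t: "0 < t" "t \<le> 1"
    have wp: "0 < w t" using w_pos t by simp
    have n: "1 - 2 * s = - e" unfolding e_def by simp
    have eq: "w t / t * ((w t powr e - w 1 powr e) / (1 - 2 * s)) = w t / t * ((w 1 powr e - w t powr e) / e)"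
      unfolding n by (metis minus_diff_eq minus_divide_left minus_divide_right)
    have le: "w t powr e \<le> w 1 powr e" using powr_mono2[of e "w t" "w 1"] e0 wp w_le1[OF t] by simp
    have nn: "0 \<le> w t / t * ((w 1 powr e - w t powr e) / e)"
      using le wp t e0 by (intro mult_nonneg_nonneg divide_nonneg_pos) auto
    have "w t / t * ((w 1 powr e - w t powr e) / e) \<le> w t / t * (w 1 powr e / e)"
      using wp t e0 by (intro mult_left_mono divide_right_mono) auto
    also have "\<dots> = w 1 powr e / e * (w t / t)" by (simp add: ac_simps)
    finally have le: "w t / t * ((w 1 powr e - w t powr e) / e) \<le> w 1 powr e / e * (w t / t)" .
    show "\<bar>w t / t * ((w t powr e - w 1 powr e) / (1 - 2 * s))\<bar> \<le> w 1 powr e / e * (w t / t)"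
      unfolding eq abs_of_nonneg[OF nn] by (rule le)
  qed
  then show ?thesis using s unfolding two_s_dini_def e_def by simp
qed

lemma res_half:
  assumes h: "two_s_dini (1/2) wb"
  shows "two_s_dini (1/2) w"
proof -
  define M where "M = w 1"
  have M: "0 < M" unfolding M_def using w_pos by simp
  have h2: "set_integrable lborel {0<..1} (\<lambda>t. PL M t / t)"
  proof (rule int_bound[OF _ set_integral_add(1)[OF one_int[of 1] set_integrable_mult_right[OF powr_integrable[of "1/2"], of "2 * M powr (1/2)"]]])
    interpret P: phk "PL M" "1/2" "1/2" by (rule phk_log[OF M])
    show "continuous_on {0<..1} (\<lambda>t. PL M t / t)"
      by (rule continuous_on_divide[OF continuous_on_subset[OF P.Pcont] continuous_on_id]) auto
    fix t :: real assume t: "0 < t" "t \<le> 1"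
    have "PL M t / t \<le> (t + 2 * M powr (1/2) * t powr (1/2)) / t"
      using PL_bound[OF M t(1)] t by (simp add: divide_right_mono)
    also have "\<dots> = 1 * t powr (1 - 1) + 2 * M powr (1 / 2) * t powr (1 / 2 - 1)"
    proof -
      have q: "t powr (1/2 - 1) = t powr (1/2) / t" using t by (simp only: powr_diff powr_one_gt_zero_iff) simp
      have "(t + 2 * M powr (1/2) * t powr (1/2)) / t = 1 + 2 * M powr (1/2) * (t powr (1/2) / t)"
        using t by (simp add: add_divide_distrib)
      then show ?thesis unfolding q using t by simp
    qed
    finally have "PL M t / t \<le> 1 * t powr (1 - 1) + 2 * M powr (1 / 2) * t powr (1 / 2 - 1)" .
    moreover have "0 \<le> PL M t" using P.Pnn t by simp
    ultimately show "\<bar>PL M t / t\<bar> \<le> 1 * t powr (1 - 1) + 2 * M powr (1 / 2) * t powr (1 / 2 - 1)"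
      using t by simp
  qed simp
  have W: "set_integrable lborel {0<..1} (\<lambda>t. PL M (w t) / t)"
    using w_phi[OF phk_log[OF M] conv_C2[OF adm h M] h2] by simp
  have "set_integrable lborel {0<..1} (\<lambda>t. w t / t * ln (w 1 / w t))"
  proof (rule int_bound[OF _ W])
    show "continuous_on {0<..1} (\<lambda>t. w t / t * ln (w 1 / w t))"
    proof -
      have c2: "continuous_on {0<..1} (\<lambda>t. w t / t)"
        by (rule continuous_on_divide[OF w_cont_pos continuous_on_id]) auto
      have c3: "continuous_on {0<..1} (\<lambda>t. w 1 / w t)"
        by (rule continuous_on_divide[OF continuous_on_const w_cont_pos]) (use wne in auto)
      have c4: "continuous_on {0<..1} (\<lambda>t. ln (w 1 / w t))"
        by (rule continuous_on_ln[OF c3]) (use wne wne[of 1] in auto)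
      show ?thesis by (rule continuous_on_mult[OF c2 c4])
    qed
    fix t :: real assume t: "0 < t" "t \<le> 1"
    have wp: "0 < w t" using w_pos t by simp
    have l0: "0 \<le> ln (w 1 / w t)" using w_le1[OF t] wp by simp
    have "ln (w 1 / w t) \<le> 1 + LL M (w t)" unfolding LL_def M_def by simp
    then have "w t / t * ln (w 1 / w t) \<le> w t / t * (1 + LL M (w t))"
      using wp t by (intro mult_left_mono) auto
    also have "\<dots> = PL M (w t) / t" by (simp add: PL_def)
    finally show "\<bar>w t / t * ln (w 1 / w t)\<bar> \<le> PL M (w t) / t" using l0 wp t by simp
  qed
  then show ?thesis unfolding two_s_dini_def by simp
qed

end

theorem lemma5p1:
  fixes \<iota> s :: real and wb :: "real \<Rightarrow> real"
  assumes "0 < \<iota>" "\<iota> < 1/3" "0 < s" "s < 1"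
    and "admissible_modulus wb"
  shows "(dini wb \<longrightarrow> (\<exists>w. good_modulus \<iota> wb w \<and> dini w)) \<and>
         (two_s_dini s wb \<longrightarrow> (\<exists>w. good_modulus \<iota> wb w \<and> two_s_dini s w))"
proof -
  obtain c where c: "1 \<le> c" "\<And>t. 1 \<le> t \<Longrightarrow> wb t \<le> c * t" using get_c[OF assms(5)] by blast
  interpret C: con wb \<iota> c by unfold_locales (use assms c in auto)
  show ?thesis
  proof (intro conjI impI)
    assume "dini wb"
    then show "\<exists>w. good_modulus \<iota> wb w \<and> dini w" using C.good C.res_dini by blast
  next
    assume h: "two_s_dini s wb"
    have "two_s_dini s C.w"
    proof (cases "s < 1/2")
      case True then show ?thesis using C.res_lt assms h by simp
    next
      case False
      show ?thesis
      proof (cases "s = 1/2")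
        case True
        from h True have "two_s_dini (1/2) wb" by simp
        then have "two_s_dini (1/2) C.w" by (rule C.res_half)
        then show ?thesis using True by metis
      next
        case False
        then have "1/2 < s" using \<open>\<not> s < 1/2\<close> by simp
        then show ?thesis using C.res_gt assms h by simp
      qed
    qed
    then show "\<exists>w. good_modulus \<iota> wb w \<and> two_s_dini s w" using C.good by blast
  qed
qed


end
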